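(* (a) Suppose a state $\Phi$ satisfies $D_{\min,\mathbb{F}}(\Phi)=D_{s,\mathbb{F}}(\Phi)=:r$, let $\sigma^\star\in\mathbb{F}$ be a free state with $2^{-r}\Phi+(1-2^{-r})\sigma^\star\in\mathbb{F}$, and for $\kappa\in[0,1]$ put $\Phi_\kappa=\kappa\Phi+(1-\kappa)\sigma^\star$. Then $D_{\min,\mathbb{F}}(\Phi_\kappa)=0$ for $0\le\kappa<1$ and $=r$ for $\kappa=1$, and $D_{\max,\mathbb{F}}(\Phi_\kappa)=D_{s,\mathbb{F}}(\Phi_\kappa)=\max\{r-\log\frac1\kappa,0\}$ for every $\kappa\in[0,1]$. (b) Suppose instead $D_{\min,\mathrm{aff}(\mathbb{F})}(\Phi)=D_{\max,\mathbb{F}}(\Phi)=:r$, let $\sigma^\star$ be a state with $2^{-r}\Phi+(1-2^{-r})\sigma^\star\in\mathbb{F}$, and $\Phi_\kappa=\kappa\Phi+(1-\kappa)\sigma^\star$. Then $D_{\min,\mathrm{aff}(\mathbb{F})}(\Phi_\kappa)=D_{\min,\mathbb{F}}(\Phi_\kappa)$ equals $0$ for $0<\kappa<1$, $\log\frac{1}{1-2^{-r}}$ for $\kappa=0$, and $r$ for $\kappa=1$; and $D_{\max,\mathbb{F}}(\Phi_\kappa)=\max\{r-\log\frac1\kappa,\ \log\frac{1-\kappa}{1-2^{-r}}\}$ for every $\kappa\in[0,1]$.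
   Context: Finite-dimensional Hilbert space, $\log$ base 2 (with $\log\frac10=+\infty$ conventions as needed). $\mathbb{F}$ is a convex and closed set of (free) states. $D_{\min}(\rho\|\sigma)=-\log\mathrm{Tr}[\Pi_\rho\sigma]$ ($\Pi_\rho$ support projector); $D_H^0(\rho\|\sigma)=\sup\{-\log\mathrm{Tr}[P\sigma]:0\le P\le\mathbb{1},\mathrm{Tr}[P\rho]=1\}$ (also for Hermitian $\sigma$). $D_{\min,\mathbb{F}}(\rho)=\inf_{\sigma\in\mathbb{F}}D_{\min}(\rho\|\sigma)$; $D_{\min,\mathrm{aff}(\mathbb{F})}(\rho)=\inf_{\sigma\in\mathrm{aff}(\mathbb{F})}D^0_H(\rho\|\sigma)$ with $\mathrm{aff}(\mathbb{F})$ the affine hull; $D_{\max,\mathbb{F}}(\rho)=\inf\{\log(1+s):\frac{\rho+s\tau}{1+s}\in\mathbb{F},\tau\text{ a state}\}$; $D_{s,\mathbb{F}}(\rho)=\inf\{\log(1+s):\frac{\rho+s\tau}{1+s}\in\mathbb{F},\tau\in\mathbb{F}\}$. (The state $\sigma^\star$ in each case is a state attaining the corresponding robustness decomposition of $\Phi$; such a state exists by closedness of $\mathbb{F}$.) *)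

theory Defs
  imports "HOL-Analysis.Analysis"
begin

type_synonym 'n op = "complex^'n^'n"

definition hermitian :: "'n::finite op \<Rightarrow> bool" where
  "hermitian A \<longleftrightarrow> (\<forall>i j. A $ i $ j = cnj (A $ j $ i))"

definition psd :: "'n::finite op \<Rightarrow> bool" where
  "psd A \<longleftrightarrow> hermitian A \<and>
     (\<forall>x::complex^'n. 0 \<le> Re (\<Sum>i\<in>UNIV. \<Sum>j\<in>UNIV. cnj (x $ i) * A $ i $ j * x $ j))"

definition density :: "'n::finite op \<Rightarrow> bool" where
  "density \<rho> \<longleftrightarrow> psd \<rho> \<and> trace \<rho> = 1"

definition supp_proj :: "'n::finite op \<Rightarrow> 'n op" where
  "supp_proj \<rho> = (THE P. hermitian P \<and> P ** P = P \<and>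
       range (\<lambda>x. P *v x) = range (\<lambda>x. \<rho> *v x))"

text \<open>Base-2 logarithm extended to ereal, with log x = -\<infinity> for x \<le> 0
  (so that -log 0 = +\<infinity>).\<close>
definition elog2 :: "real \<Rightarrow> ereal" where
  "elog2 x = (if x \<le> 0 then -\<infinity> else ereal (log 2 x))"

definition Dmin :: "'n::finite op \<Rightarrow> 'n op \<Rightarrow> ereal" where
  "Dmin \<rho> \<sigma> = - elog2 (Re (trace (supp_proj \<rho> ** \<sigma>)))"

definition DH0 :: "'n::finite op \<Rightarrow> 'n op \<Rightarrow> ereal" where
  "DH0 \<rho> \<sigma> = (SUP P \<in> {P. psd P \<and> psd (mat 1 - P) \<and> trace (P ** \<rho>) = 1}.
                   - elog2 (Re (trace (P ** \<sigma>))))"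

definition Dmin_F :: "'n::finite op set \<Rightarrow> 'n op \<Rightarrow> ereal" where
  "Dmin_F F \<rho> = (INF \<sigma> \<in> F. Dmin \<rho> \<sigma>)"

definition Dmin_aff :: "'n::finite op set \<Rightarrow> 'n op \<Rightarrow> ereal" where
  "Dmin_aff F \<rho> = (INF \<sigma> \<in> affine hull F. DH0 \<rho> \<sigma>)"

definition Dmax_F :: "'n::finite op set \<Rightarrow> 'n op \<Rightarrow> ereal" where
  "Dmax_F F \<rho> = (INF s \<in> {s::real. 0 \<le> s \<and>
      (\<exists>\<tau>. density \<tau> \<and> (1 / (1 + s)) *\<^sub>R (\<rho> + s *\<^sub>R \<tau>) \<in> F)}. ereal (log 2 (1 + s)))"

definition Ds_F :: "'n::finite op set \<Rightarrow> 'n op \<Rightarrow> ereal" where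
  "Ds_F F \<rho> = (INF s \<in> {s::real. 0 \<le> s \<and>
      (\<exists>\<tau>\<in>F. (1 / (1 + s)) *\<^sub>R (\<rho> + s *\<^sub>R \<tau>) \<in> F)}. ereal (log 2 (1 + s)))"

end

theory Submission
  imports Defs
begin


definition adj :: "complex^'n::finite^'n \<Rightarrow> complex^'n^'n" where
  "adj A = (\<chi> i j. cnj (A$j$i))"
definition cinner :: "complex^'n::finite \<Rightarrow> complex^'n \<Rightarrow> complex" where
  "cinner x y = (\<Sum>i\<in>UNIV. cnj (x$i) * y$i)"
definition outer :: "complex^'n::finite \<Rightarrow> complex^'n \<Rightarrow> complex^'n^'n" where
  "outer v w = (\<chi> i j. v$i * cnj (w$j))"
definition proj :: "complex^'n::finite^'n \<Rightarrow> bool" where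
  "proj P \<longleftrightarrow> hermitian P \<and> P ** P = P"

lemma adj_nth[simp]: "adj A $ i $ j = cnj (A$j$i)" by (simp add: adj_def)
lemma outer_nth[simp]: "outer v w $ i $ j = v$i * cnj (w$j)" by (simp add: outer_def)

lemma hermitian_adj: "hermitian A \<longleftrightarrow> adj A = A"
proof
  assume h: "hermitian A"
  show "adj A = A" unfolding vec_eq_iff adj_nth using h[unfolded hermitian_def] by metis
next
  assume "adj A = A" then show "hermitian A" unfolding hermitian_def by (metis adj_nth)
qed

lemma adj_adj[simp]: "adj (adj A) = A" by (simp add: vec_eq_iff)
lemma adj_add: "adj (A + B) = adj A + adj B" by (simp add: vec_eq_iff)
lemma adj_diff: "adj (A - B) = adj A - adj B" by (simp add: vec_eq_iff)
lemma adj_scaleR: "adj (c *\<^sub>R A) = c *\<^sub>R adj A" by (simp add: vec_eq_iff complex_cnj_scaleR)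
lemma adj_mat1[simp]: "adj (mat 1) = mat 1" by (simp add: vec_eq_iff mat_def)
lemma adj_mult: "adj (A ** B) = adj B ** adj A"
  by (simp add: vec_eq_iff matrix_matrix_mult_def mult.commute)
lemma adj_outer: "adj (outer v w) = outer w v" by (simp add: vec_eq_iff mult.commute)

lemma cinner_adj: "cinner x (A *v y) = cinner (adj A *v x) y"
  apply (simp add: cinner_def matrix_vector_mult_def sum_distrib_left sum_distrib_right mult_ac)
  apply (subst sum.swap) apply (simp add: mult_ac) done

lemma cinner_cnj: "cnj (cinner x y) = cinner y x"
  by (simp add: cinner_def mult.commute)

lemma cinner_herm: "hermitian A \<Longrightarrow> cinner x (A *v y) = cnj (cinner y (A *v x))"
  by (metis cinner_adj cinner_cnj hermitian_adj)

lemma cinner_add_left: "cinner (x + y) z = cinner x z + cinner y z"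
  by (simp add: cinner_def sum.distrib algebra_simps)
lemma cinner_add_right: "cinner z (x + y) = cinner z x + cinner z y"
  by (simp add: cinner_def sum.distrib algebra_simps)
lemma cinner_diff_left: "cinner (x - y) z = cinner x z - cinner y z"
  by (simp add: cinner_def sum_subtractf algebra_simps)
lemma cinner_diff_right: "cinner z (x - y) = cinner z x - cinner z y"
  by (simp add: cinner_def sum_subtractf algebra_simps)
lemma cinner_smult_left: "cinner (c *s x) z = cnj c * cinner x z"
  by (simp add: cinner_def sum_distrib_left mult_ac)
lemma cinner_smult_right: "cinner z (c *s x) = c * cinner z x"
  by (simp add: cinner_def sum_distrib_left mult_ac)
lemma cinner_zero_left[simp]: "cinner 0 z = 0" by (simp add: cinner_def)
lemma cinner_zero_right[simp]: "cinner z 0 = 0" by (simp add: cinner_def)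
lemma cinner_self_Im: "Im (cinner x x) = 0"
  by (simp add: cinner_def Im_sum)
lemma cinner_self_Re: "Re (cinner x x) = (\<Sum>i\<in>UNIV. (cmod (x$i))^2)"
  by (simp add: cinner_def Re_sum cmod_power2) (simp add: power2_eq_square)
lemma cinner_self_real: "cinner x x = of_real (Re (cinner x x))"
  using cinner_self_Im by (simp add: complex_eq_iff)
lemma cinner_self_nonneg: "0 \<le> Re (cinner x x)"
  by (simp add: cinner_self_Re sum_nonneg)
lemma cinner_self_eq0: "Re (cinner x x) = 0 \<longleftrightarrow> x = 0"
proof
  assume "Re (cinner x x) = 0"
  then have "\<forall>i\<in>UNIV. (cmod (x$i))^2 = 0"
    by (subst sum_nonneg_eq_0_iff[symmetric]) (auto simp: cinner_self_Re)
  then show "x = 0" by (simp add: vec_eq_iff)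
qed simp

lemma psd_iff: "psd A \<longleftrightarrow> hermitian A \<and> (\<forall>x. 0 \<le> Re (cinner x (A *v x)))"
proof -
  have "(\<Sum>i\<in>UNIV. \<Sum>j\<in>UNIV. cnj (x $ i) * A $ i $ j * x $ j) = cinner x (A *v x)" for x
    by (simp add: cinner_def matrix_vector_mult_def sum_distrib_left mult_ac)
  then show ?thesis unfolding psd_def by simp
qed

lemma psd_herm: "psd A \<Longrightarrow> hermitian A" by (simp add: psd_def)
lemma psd_nonneg: "psd A \<Longrightarrow> 0 \<le> Re (cinner x (A *v x))" by (simp add: psd_iff)

lemma herm_qf_real: "hermitian A \<Longrightarrow> Im (cinner x (A *v x)) = 0"
  using cinner_herm[of A x x] by (metis cnj.simps(2) complex_cnj_cnj eq_iff_diff_eq_0 minus_complex.simps(2) neg_equal_zero)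
lemma herm_qf_eq: "hermitian A \<Longrightarrow> cinner x (A *v x) = of_real (Re (cinner x (A *v x)))"
  using herm_qf_real by (simp add: complex_eq_iff)

lemma mat_eqI: "(\<And>x. A *v x = B *v x) \<Longrightarrow> (A::complex^'n::finite^'n) = B"
  using matrix_eq by blast

lemma axis_col: "(A *v axis j 1) $ i = A $ i $ j"
  by (simp add: matrix_vector_mult_def axis_def if_distrib cong: if_cong)
lemma cinner_axis: "cinner (axis i 1) x = x $ i"
proof -
  have "\<And>j. cnj (axis i 1 $ j) * x $ j = (if j = i then x$j else 0)" by (simp add: axis_def)
  then show ?thesis unfolding cinner_def by simp
qed
lemma cinner_axis_right: "cinner x (axis i 1) = cnj (x $ i)"
  by (metis cinner_axis cinner_cnj)

lemma outer_mulv: "outer v w *v x = cinner w x *s v"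
  by (simp add: vec_eq_iff matrix_vector_mult_def cinner_def sum_distrib_left mult_ac)
lemma mult_outer: "A ** outer v w = outer (A *v v) w"
  by (simp add: vec_eq_iff matrix_vector_mult_def matrix_matrix_mult_def sum_distrib_right sum_distrib_left mult_ac)
lemma outer_mult: "outer v w ** A = outer v (adj A *v w)"
  by (simp add: vec_eq_iff matrix_vector_mult_def matrix_matrix_mult_def sum_distrib_left mult_ac)

lemma trace_outer: "trace (A ** outer v v) = cinner v (A *v v)"
  by (simp add: trace_def matrix_matrix_mult_def cinner_def matrix_vector_mult_def
       sum_distrib_left mult_ac)

lemma trace_adj: "trace (adj A) = cnj (trace A)"
  by (simp add: trace_def)
lemma trace_herm_prod_real: "hermitian A \<Longrightarrow> hermitian B \<Longrightarrow> Im (trace (A ** B)) = 0"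
proof -
  assume "hermitian A" "hermitian B"
  then have "cnj (trace (A ** B)) = trace (A ** B)"
    by (metis adj_mult hermitian_adj trace_adj trace_mul_sym)
  then show ?thesis by (metis cnj.simps(2) eq_iff_diff_eq_0 minus_complex.simps(2) neg_equal_zero)
qed
lemma trace_scaleR: "trace ((c::real) *\<^sub>R (A:: complex^'n::finite^'n)) = of_real c * trace A"
proof -
  have "trace (c *\<^sub>R A) = (\<Sum>i\<in>UNIV. c *\<^sub>R (A$i$i))" by (simp add: trace_def)
  also have "\<dots> = c *\<^sub>R trace A" by (simp add: trace_def scaleR_sum_right)
  finally show ?thesis by (simp add: scaleR_conv_of_real)
qed
lemma mmult_scaleR_left: "((c::real) *\<^sub>R A) ** (B::complex^'n::finite^'n) = c *\<^sub>R (A ** B)"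
  by (simp add: vec_eq_iff matrix_matrix_mult_def scaleR_sum_right)
lemma mmult_scaleR_right: "(A:: complex^'n::finite^'n) ** ((c::real) *\<^sub>R B) = c *\<^sub>R (A ** B)"
  by (simp add: vec_eq_iff matrix_matrix_mult_def scaleR_sum_right)
lemma mulv_scaleR: "((c::real) *\<^sub>R (A:: complex^'n::finite^'n)) *v x = c *\<^sub>R (A *v x)"
  by (simp add: vec_eq_iff matrix_vector_mult_def scaleR_sum_right)
lemma mult_diff_left: "(A - B) ** C = A ** C - B ** (C::complex^'n::finite^'n)"
  by (simp add: vec_eq_iff matrix_matrix_mult_def sum_subtractf algebra_simps)
lemma mult_diff_right: "C ** (A - B) = C ** A - C ** (B::complex^'n::finite^'n)"
  by (simp add: vec_eq_iff matrix_matrix_mult_def sum_subtractf algebra_simps)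
lemma mult_add_left: "(A + B) ** C = A ** C + B ** (C::complex^'n::finite^'n)"
  by (simp add: vec_eq_iff matrix_matrix_mult_def sum.distrib algebra_simps)
lemma mult_add_right: "C ** (A + B) = C ** A + C ** (B::complex^'n::finite^'n)"
  by (simp add: matrix_add_ldistrib)



lemma mulv_smult: "(A::complex^'n::finite^'n) *v (c *s x) = c *s (A *v x)"
  by (simp add: vec_eq_iff matrix_vector_mult_def sum_distrib_left mult_ac)

lemma scaleR_smult: "(r::real) *\<^sub>R (x::complex^'n::finite) = of_real r *s x"
  by (auto simp: vec_eq_iff complex_eq_iff)


lemma qf_expand:
  "cinner (x + l *s y) ((B::complex^'n::finite^'n) *v (x + l *s y)) =
     cinner x (B *v x) + l * cinner x (B *v y) + cnj l * cinner y (B *v x) + cnj l * l * cinner y (B *v y)"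
  by (simp add: matrix_vector_right_distrib mulv_smult cinner_add_left cinner_add_right
      cinner_smult_left cinner_smult_right algebra_simps)

lemma qf_axis: "cinner (axis i 1) (B *v axis i 1) = B $ i $ i"
  by (simp add: cinner_axis axis_col)

lemma psd_Z:
  assumes "psd B" "Re (cinner x (B *v x)) = 0"
  shows "B *v x = 0"
proof -
  have herm: "hermitian B" using assms(1) by (simp add: psd_def)
  have "(B *v x) $ i = 0" for i
  proof -
    define y :: "complex^'a" where "y = axis i 1"
    define b where "b = cinner y (B *v x)"
    define d where "d = Re (cinner y (B *v y))"
    have bi: "b = (B *v x) $ i" by (simp add: b_def y_def cinner_axis)
    have xy: "cinner x (B *v y) = cnj b" using cinner_herm[OF herm, of x y] by (simp add: b_def)
    have yy: "cinner y (B *v y) = of_real d" using herm_qf_eq[OF herm, of y] by (simp add: d_def)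
    have d0: "0 \<le> d" using psd_nonneg[OF assms(1)] by (simp add: d_def)
    define t where "t = 1 / (d + 1)"
    have t0: "0 < t" using d0 by (simp add: t_def)
    define l where "l = - (of_real t * b)"
    have h0: "0 \<le> Re (cinner (x + l *s y) (B *v (x + l *s y)))" using psd_nonneg[OF assms(1)] .
    define nb where "nb = (Re b)^2 + (Im b)^2"
    have h1: "Re (cinner (x + l *s y) (B *v (x + l *s y))) = - 2 * t * nb + t^2 * nb * d"
      unfolding qf_expand xy yy using assms(2) b_def
      by (simp add: l_def nb_def power2_eq_square algebra_simps)
    have "0 \<le> nb * (t * (t * d - 2))" using h0 h1 by (simp add: algebra_simps power2_eq_square)
    moreover have "t * d < 1" using d0 by (simp add: t_def field_simps)
    moreover have "0 \<le> nb" by (simp add: nb_def)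
    ultimately have "nb \<le> 0"
      by (smt (verit) mult_nonneg_nonpos mult_pos_neg t0 zero_less_mult_iff)
    then have "b = 0" by (simp add: nb_def complex_eq_iff) (smt (verit) sum_power2_eq_zero_iff zero_le_power2)
    then show ?thesis using bi by simp
  qed
  then show ?thesis by (simp add: vec_eq_iff)
qed

lemma psd_add: "psd A \<Longrightarrow> psd B \<Longrightarrow> psd (A + B)"
  by (simp add: psd_iff hermitian_adj adj_add matrix_vector_mult_add_rdistrib cinner_add_right)
lemma psd_scaleR: "psd A \<Longrightarrow> 0 \<le> c \<Longrightarrow> psd (c *\<^sub>R A)"
  by (simp add: psd_iff hermitian_adj adj_scaleR mulv_scaleR scaleR_smult cinner_smult_right)
lemma psd_zero: "psd 0"
  by (simp add: psd_iff hermitian_def)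
lemma herm_mat1: "hermitian (mat 1)" by (simp add: hermitian_def mat_def)
lemma psd_mat1: "psd (mat 1)"
  by (simp add: psd_iff herm_mat1 cinner_self_nonneg)

lemma proj_psd: "proj P \<Longrightarrow> psd P"
proof -
  assume "proj P"
  then have h: "adj P = P" and pp: "P ** P = P" by (auto simp: proj_def hermitian_adj)
  have "cinner x (P *v x) = cinner (P *v x) (P *v x)" for x
    by (metis cinner_adj h matrix_vector_mul_assoc pp)
  then show "psd P" using h by (simp add: psd_iff hermitian_adj cinner_self_nonneg)
qed

lemma proj_compl: "proj P \<Longrightarrow> proj (mat 1 - P)"
  by (simp add: proj_def hermitian_adj adj_diff mult_diff_left mult_diff_right)

lemma psd_zero_diag: "psd B \<Longrightarrow> (\<forall>i. B$i$i = 0) \<Longrightarrow> B = 0"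
proof -
  assume a: "psd B" "\<forall>i. B$i$i = 0"
  have "B *v axis i 1 = 0" for i
    by (rule psd_Z[OF a(1)]) (simp add: qf_axis a(2))
  then show "B = 0" by (simp add: vec_eq_iff) (metis axis_col zero_index)
qed



lemma outer_scale: "outer (of_real r *s u) w = r *\<^sub>R outer u w"
  by (auto simp: vec_eq_iff complex_eq_iff algebra_simps)

lemma herm_diag_real: "hermitian B \<Longrightarrow> B $ i $ i = of_real (Re (B $ i $ i))"
  by (metis herm_qf_eq qf_axis)

lemma schur_step:
  fixes B :: "complex^'n::finite^'n"
  assumes psd: "psd B" and nz: "B$i$i \<noteq> 0"
  defines "v \<equiv> B *v axis i 1" and "d \<equiv> Re (B$i$i)"
  defines "B' \<equiv> B - (1/d) *\<^sub>R outer v v"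
  shows "0 < d" "psd B'" "B'$i$i = 0" "\<And>j. B$j$j = 0 \<Longrightarrow> B'$j$j = 0"
    "\<And>y. \<exists>z. B' *v y = B *v z"
proof -
  have herm: "hermitian B" using psd by (simp add: psd_def)
  have Bii: "B$i$i = of_real d" using herm_diag_real[OF herm] by (simp add: d_def)
  have "0 \<le> d" using psd_nonneg[OF psd, of "axis i 1"] by (simp add: qf_axis d_def)
  moreover have "d \<noteq> 0" using nz Bii by auto
  ultimately show d0: "0 < d" by simp
  have vi: "v $ i = of_real d" using Bii by (simp add: v_def axis_col)
  have cv: "cinner v x = (B *v x) $ i" for x
    using cinner_adj[of "axis i 1" B x] herm
    by (simp add: v_def cinner_axis hermitian_adj cinner_cnj)
  have hB': "hermitian B'"
    using herm by (simp add: B'_def hermitian_adj adj_diff adj_scaleR adj_outer)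
  have qB': "cinner x (B' *v x) = cinner x (B *v x) - of_real (1/d) * (cinner x v * cinner v x)" for x
    by (simp add: B'_def matrix_vector_mult_diff_rdistrib mulv_scaleR outer_mulv scaleR_smult
        cinner_diff_right cinner_smult_right)
  have "0 \<le> Re (cinner x (B' *v x))" for x
  proof -
    define b where "b = (B *v x) $ i"
    define l where "l = - (b / of_real d)"
    have xv: "cinner x v = cnj b" using cv[of x] by (metis b_def cinner_cnj)
    have xBy: "cinner x (B *v axis i 1) = cnj b" using xv by (simp add: v_def)
    have yBx: "cinner (axis i 1) (B *v x) = b" by (simp add: b_def cinner_axis)
    have "0 \<le> Re (cinner (x + l *s axis i 1) (B *v (x + l *s axis i 1)))" by (rule psd_nonneg[OF psd])
    also have "cinner (x + l *s axis i 1) (B *v (x + l *s axis i 1)) =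
       cinner x (B *v x) + l * cnj b + cnj l * b + cnj l * l * of_real d"
      unfolding qf_expand xBy yBx qf_axis Bii ..
    also have "\<dots> = cinner x (B' *v x)"
      unfolding qB' xv cv[of x, folded b_def] using d0
      by (simp add: l_def field_simps)
    finally show ?thesis .
  qed
  then show "psd B'" using hB' by (simp add: psd_iff)
  show "B'$i$i = 0" using vi d0 by (simp add: B'_def Bii) (simp add: scaleR_conv_of_real field_simps)
  show "B'$j$j = 0" if "B$j$j = 0" for j
  proof -
    have "B *v axis j 1 = 0" by (rule psd_Z[OF psd]) (simp add: qf_axis that)
    then have "B $ i $ j = 0" by (metis axis_col zero_index)
    then have "v $ j = 0" using herm unfolding hermitian_def by (metis axis_col complex_cnj_zero v_def)
    then show ?thesis by (simp add: B'_def that)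
  qed
  show "\<exists>z. B' *v y = B *v z" for y
  proof
    show "B' *v y = B *v (y - (of_real (1/d) * cinner v y) *s axis i 1)"
      by (simp add: B'_def matrix_vector_mult_diff_rdistrib matrix_vector_mult_diff_distrib
           mulv_scaleR outer_mulv scaleR_smult mulv_smult v_def)
  qed
qed

lemma card_diag_less:
  fixes B B' :: "complex^'n::finite^'n"
  assumes "B$i$i \<noteq> 0" "B'$i$i = 0" "\<And>j. B$j$j = 0 \<Longrightarrow> B'$j$j = 0"
  shows "card {j. B'$j$j \<noteq> 0} < card {j. B$j$j \<noteq> 0}"
  apply (rule psubset_card_mono) using assms by auto

lemma psd_induct[consumes 1, case_names zero step]:
  fixes B :: "complex^'n::finite^'n"
  assumes "psd B"
    and base: "P 0"
    and step: "\<And>B i. psd B \<Longrightarrow> B$i$i \<noteq> 0 \<Longrightarrow>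
        psd (B - (1/Re (B$i$i)) *\<^sub>R outer (B *v axis i 1) (B *v axis i 1)) \<Longrightarrow>
        P (B - (1/Re (B$i$i)) *\<^sub>R outer (B *v axis i 1) (B *v axis i 1)) \<Longrightarrow> P B"
  shows "P B"
proof -
  have "\<And>B::complex^'n^'n. psd B \<Longrightarrow> card {j. B$j$j \<noteq> 0} = k \<Longrightarrow> P B" for k
  proof (induction k rule: less_induct)
    case (less k B)
    show ?case
    proof (cases "\<forall>i. B$i$i = 0")
      case True
      then show ?thesis using psd_zero_diag[OF less.prems(1)] base by simp
    next
      case False
      then obtain i where i: "B$i$i \<noteq> 0" by auto
      note S = schur_step[OF less.prems(1) i]
      show ?thesis
        apply (rule step[OF less.prems(1) i S(2)])
        apply (rule less.IH[OF _ S(2) refl])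
        using card_diag_less[OF i S(3) S(4)] less.prems(2) by simp
    qed
  qed
  then show ?thesis using assms(1) by blast
qed

definition osum :: "(real \<times> (complex^'n::finite)) list \<Rightarrow> complex^'n^'n" where
  "osum cs = sum_list (map (\<lambda>(c,v). c *\<^sub>R outer v v) cs)"

lemma osum_Nil[simp]: "osum [] = 0" by (simp add: osum_def)
lemma osum_Cons[simp]: "osum ((c,v) # cs) = c *\<^sub>R outer v v + osum cs" by (simp add: osum_def)

lemma psd_decomp: "psd B \<Longrightarrow> \<exists>cs. B = osum cs \<and> (\<forall>p\<in>set cs. 0 \<le> fst p)"
proof (induction B rule: psd_induct)
  case zero
  then show ?case by (intro exI[of _ "[]"]) simp
next
  case (step B i)
  then obtain cs where cs: "B - (1 / Re (B $ i $ i)) *\<^sub>R outer (B *v axis i 1) (B *v axis i 1) = osum cs"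
     "\<forall>p\<in>set cs. 0 \<le> fst p" by blast
  have d0: "0 < Re (B$i$i)" using schur_step(1)[OF step(1,2)] .
  show ?case
    apply (intro exI[of _ "(1 / Re (B $ i $ i), B *v axis i 1) # cs"])
    using cs d0 by (auto simp: algebra_simps)
qed

lemma tpos_osum:
  assumes "psd A" "\<forall>p\<in>set cs. 0 \<le> fst p"
  shows "0 \<le> Re (trace (A ** osum cs)) \<and> (Re (trace (A ** osum cs)) = 0 \<longrightarrow> A ** osum cs = 0)"
  using assms(2)
proof (induction cs)
  case Nil
  then show ?case by (simp add: trace_0[simplified])
next
  case (Cons p cs)
  obtain c v where p: "p = (c, v)" by (cases p)
  have c0: "0 \<le> c" using Cons.prems p by auto
  have IH: "0 \<le> Re (trace (A ** osum cs)) \<and> (Re (trace (A ** osum cs)) = 0 \<longrightarrow> A ** osum cs = 0)"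
    using Cons by auto
  have q0: "0 \<le> Re (cinner v (A *v v))" by (rule psd_nonneg[OF assms(1)])
  have tr: "Re (trace (A ** osum (p # cs))) = c * Re (cinner v (A *v v)) + Re (trace (A ** osum cs))"
    by (simp add: p matrix_add_ldistrib trace_add mmult_scaleR_right trace_scaleR trace_outer)
  show ?case
  proof
    show "0 \<le> Re (trace (A ** osum (p # cs)))" using tr IH c0 q0 by simp
    show "Re (trace (A ** osum (p # cs))) = 0 \<longrightarrow> A ** osum (p # cs) = 0"
    proof
      assume z: "Re (trace (A ** osum (p # cs))) = 0"
      then have z1: "c * Re (cinner v (A *v v)) = 0" and z2: "Re (trace (A ** osum cs)) = 0"
        using tr IH c0 q0 by (smt (verit) mult_nonneg_nonneg)+
      have "c *\<^sub>R (A ** outer v v) = 0"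
      proof (cases "c = 0")
        case False
        then have "Re (cinner v (A *v v)) = 0" using z1 by simp
        then have "A *v v = 0" by (rule psd_Z[OF assms(1)])
        then show ?thesis by (simp add: mult_outer vec_eq_iff)
      qed simp
      then show "A ** osum (p # cs) = 0" using IH z2
        by (simp add: p matrix_add_ldistrib mmult_scaleR_right)
    qed
  qed
qed

lemma tpos: "psd A \<Longrightarrow> psd B \<Longrightarrow> 0 \<le> Re (trace (A ** B))"
  using psd_decomp[of B] tpos_osum[of A] by blast
lemma tpos_zero: "psd A \<Longrightarrow> psd B \<Longrightarrow> Re (trace (A ** B)) = 0 \<Longrightarrow> A ** B = 0"
  using psd_decomp[of B] tpos_osum[of A] by blast



lemma proj_exists:
  fixes B :: "complex^'n::finite^'n"
  assumes "psd B"
  shows "\<exists>P. proj P \<and> P ** B = B \<and> (\<forall>x. \<exists>y. P *v x = B *v y)"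
  using assms
proof (induction B rule: psd_induct)
  case zero
  show ?case
    by (intro exI[of _ 0]) (auto simp: proj_def hermitian_def)
next
  case (step B i)
  define d where "d = Re (B$i$i)"
  define v where "v = B *v axis i 1"
  define B' where "B' = B - (1/d) *\<^sub>R outer v v"
  have d0: "0 < d" using schur_step(1)[OF step(1,2)] by (simp add: d_def)
  have psdB': "psd B'" using step(3) by (simp add: B'_def d_def v_def)
  obtain P' where P': "proj P'" "P' ** B' = B'" "\<And>x. \<exists>y. P' *v x = B' *v y"
    using step(4) by (auto simp: B'_def d_def v_def)
  have hP': "adj P' = P'" and PP': "P' ** P' = P'" using P'(1) by (auto simp: proj_def hermitian_adj)
  have hB': "adj B' = B'" using psdB' by (simp add: psd_def hermitian_adj)
  have B'P': "B' ** P' = B'" by (metis P'(2) adj_mult hB' hP')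
  have B_eq: "B = B' + (1/d) *\<^sub>R outer v v" by (simp add: B'_def)
  have rngB': "\<exists>z. B' *v y = B *v z" for y
    using schur_step(5)[OF step(1,2)] by (simp add: B'_def d_def v_def)
  have rngP': "\<exists>z. P' *v x = B *v z" for x
    using P'(3)[of x] rngB' by metis
  define u where "u = v - P' *v v"
  have P'u: "P' *v u = 0"
    by (simp add: u_def matrix_vector_mult_diff_distrib matrix_vector_mul_assoc PP')
  have B'u: "B' *v u = 0"
    by (simp add: u_def matrix_vector_mult_diff_distrib matrix_vector_mul_assoc B'P')
  show ?case
  proof (cases "u = 0")
    case True
    then have P'v: "P' *v v = v" by (simp add: u_def)
    show ?thesis
    proof (intro exI[of _ P'] conjI allI)
      show "proj P'" by fact
      show "P' ** B = B"
        by (simp add: B_eq matrix_add_ldistrib P'(2) mmult_scaleR_right mult_outer P'v)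
      show "\<exists>y. P' *v x = B *v y" for x by (rule rngP')
    qed
  next
    case False
    define N where "N = Re (cinner u u)"
    have N0: "0 < N" using False cinner_self_eq0[of u] cinner_self_nonneg[of u] by (simp add: N_def)
    have uu: "cinner u u = of_real N" by (simp add: N_def cinner_self_real[symmetric])
    define P where "P = P' + (1/N) *\<^sub>R outer u u"
    have uv: "cinner u v = of_real N"
    proof -
      have "v = u + P' *v v" by (simp add: u_def)
      then have "cinner u v = cinner u u + cinner u (P' *v v)" by (metis cinner_add_right)
      also have "cinner u (P' *v v) = 0" by (simp add: cinner_adj hP' P'u)
      finally show ?thesis by (simp add: uu)
    qed
    have hP: "hermitian P" by (simp add: hermitian_adj P_def adj_add adj_scaleR adj_outer hP')
    have PP: "P ** P = P"
    proof -
      have "P ** P = P' ** P' + (1/N) *\<^sub>R (P' ** outer u u) + (1/N) *\<^sub>R (outer u u ** P')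
           + ((1/N) * (1/N)) *\<^sub>R (outer u u ** outer u u)"
        by (simp add: P_def matrix_add_ldistrib mult_add_left mmult_scaleR_left mmult_scaleR_right algebra_simps)
      also have "outer u u ** outer u u = N *\<^sub>R outer u u"
        by (simp add: mult_outer outer_mulv uu outer_scale)
      also have "P' ** outer u u = 0" by (simp add: mult_outer P'u vec_eq_iff)
      also have "outer u u ** P' = 0" by (simp add: outer_mult hP' P'u vec_eq_iff)
      finally show ?thesis using N0 by (simp add: PP' P_def)
    qed
    have Pv: "P *v v = v"
    proof -
      have "P *v v = P' *v v + (1/N) *\<^sub>R (cinner u v *s u)"
        by (simp add: P_def matrix_vector_mult_add_rdistrib mulv_scaleR outer_mulv)
      also have "\<dots> = P' *v v + u" using N0
        by (simp add: uv scaleR_smult vector_smult_assoc flip: of_real_mult)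
      finally show ?thesis by (simp add: u_def)
    qed
    have PB: "P ** B = B"
    proof -
      have "P ** B' = B'"
        by (simp add: P_def mult_add_left P'(2) mmult_scaleR_left outer_mult hB' B'u vec_eq_iff)
      moreover have "P ** outer v v = outer v v" by (simp add: mult_outer Pv)
      ultimately show ?thesis by (simp add: B_eq matrix_add_ldistrib mmult_scaleR_right)
    qed
    have rngP: "\<exists>y. P *v x = B *v y" for x
    proof -
      obtain z where z: "P' *v x = B *v z" using rngP' by blast
      obtain w where w: "P' *v v = B *v w" using rngP' by blast
      have u: "u = B *v (axis i 1 - w)"
        using w unfolding u_def by (simp add: matrix_vector_mult_diff_distrib v_def)
      have "P *v x = P' *v x + (of_real (1/N) * cinner u x) *s u"
        by (simp add: P_def matrix_vector_mult_add_rdistrib mulv_scaleR outer_mulv scaleR_smult vector_smult_assoc)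
      also have "\<dots> = B *v z + (of_real (1/N) * cinner u x) *s (B *v (axis i 1 - w))"
        by (simp only: z u)
      also have "\<dots> = B *v (z + (of_real (1/N) * cinner u x) *s (axis i 1 - w))"
        by (simp only: matrix_vector_right_distrib mulv_smult)
      finally show ?thesis by blast
    qed
    show ?thesis using hP PP PB rngP by (auto simp: proj_def)
  qed
qed

lemma proj_unique:
  assumes "proj P" "proj Q" "range (\<lambda>x. P *v x) = range (\<lambda>x. Q *v x)"
  shows "P = Q"
proof -
  have hP: "adj P = P" "P ** P = P" and hQ: "adj Q = Q" "Q ** Q = Q"
    using assms(1,2) by (auto simp: proj_def hermitian_adj)
  have PQ: "P ** Q = Q"
  proof (rule mat_eqI)
    fix x
    obtain y where "Q *v x = P *v y" using assms(3) by (metis rangeE rangeI)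
    then show "(P ** Q) *v x = Q *v x"
      by (metis hP(2) matrix_vector_mul_assoc)
  qed
  have QP: "Q ** P = P"
  proof (rule mat_eqI)
    fix x
    obtain y where "P *v x = Q *v y" using assms(3) by (metis rangeE rangeI)
    then show "(Q ** P) *v x = P *v x"
      by (metis hQ(2) matrix_vector_mul_assoc)
  qed
  have "Q = adj (P ** Q)" using PQ hQ by simp
  also have "\<dots> = Q ** P" by (simp add: adj_mult hP hQ)
  finally show ?thesis using QP by simp
qed

lemma supp_proj_props:
  fixes \<rho> :: "complex^'n::finite^'n"
  assumes "psd \<rho>"
  shows "proj (supp_proj \<rho>)" "supp_proj \<rho> ** \<rho> = \<rho>" "\<And>x. \<exists>y. supp_proj \<rho> *v x = \<rho> *v y"
proof -
  obtain P where P: "proj P" "P ** \<rho> = \<rho>" "\<And>x. \<exists>y. P *v x = \<rho> *v y"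
    using proj_exists[OF assms] by blast
  have rng: "range (\<lambda>x. P *v x) = range (\<lambda>x. \<rho> *v x)"
  proof
    show "range (\<lambda>x. P *v x) \<subseteq> range (\<lambda>x. \<rho> *v x)" using P(3) by blast
    show "range (\<lambda>x. \<rho> *v x) \<subseteq> range (\<lambda>x. P *v x)"
    proof
      fix z assume "z \<in> range (\<lambda>x. \<rho> *v x)"
      then obtain x where "z = \<rho> *v x" by blast
      then have "z = P *v (\<rho> *v x)" by (metis P(2) matrix_vector_mul_assoc)
      then show "z \<in> range (\<lambda>x. P *v x)" by blast
    qed
  qed
  have "supp_proj \<rho> = P"
    unfolding supp_proj_def
  proof (rule the_equality)
    show "hermitian P \<and> P ** P = P \<and> range ((*v) P) = range ((*v) \<rho>)"
      using P(1) rng by (simp add: proj_def)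
    fix Q assume "hermitian Q \<and> Q ** Q = Q \<and> range ((*v) Q) = range ((*v) \<rho>)"
    then show "Q = P" using proj_unique[of Q P] P(1) rng by (simp add: proj_def)
  qed
  then show "proj (supp_proj \<rho>)" "supp_proj \<rho> ** \<rho> = \<rho>" "\<And>x. \<exists>y. supp_proj \<rho> *v x = \<rho> *v y"
    using P by auto
qed



lemma elog2_pos: "0 < x \<Longrightarrow> elog2 x = ereal (log 2 x)" by (simp add: elog2_def)
lemma elog2_nonpos: "x \<le> 0 \<Longrightarrow> elog2 x = -\<infinity>" by (simp add: elog2_def)
lemma elog2_mono: "x \<le> y \<Longrightarrow> elog2 x \<le> elog2 y"
  by (auto simp: elog2_def)
lemma elog2_1[simp]: "elog2 1 = 0" by (simp add: elog2_def zero_ereal_def)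
lemma neg_elog2_anti: "x \<le> y \<Longrightarrow> - elog2 y \<le> - elog2 x"
  by (simp add: elog2_mono)

lemma density_psd: "density \<rho> \<Longrightarrow> psd \<rho>" by (simp add: density_def)
lemma density_tr: "density \<rho> \<Longrightarrow> trace \<rho> = 1" by (simp add: density_def)

lemma density_comb:
  assumes "density A" "density B" "0 \<le> a" "a \<le> 1"
  shows "density (a *\<^sub>R A + (1 - a) *\<^sub>R B)"
  using assms by (auto simp: density_def trace_add trace_scaleR intro!: psd_add psd_scaleR)

lemma proj_trace_bounds:
  assumes "proj P" "psd \<sigma>"
  shows "0 \<le> Re (trace (P ** \<sigma>))" "Re (trace (P ** \<sigma>)) \<le> Re (trace \<sigma>)"
proof -
  show "0 \<le> Re (trace (P ** \<sigma>))" by (rule tpos[OF proj_psd[OF assms(1)] assms(2)])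
  have "0 \<le> Re (trace ((mat 1 - P) ** \<sigma>))" by (rule tpos[OF proj_psd[OF proj_compl[OF assms(1)]] assms(2)])
  then show "Re (trace (P ** \<sigma>)) \<le> Re (trace \<sigma>)" by (simp add: mult_diff_left trace_sub)
qed

lemma Dmin_nonneg:
  assumes "psd \<rho>" "density \<sigma>"
  shows "0 \<le> Dmin \<rho> \<sigma>"
proof -
  have "Re (trace (supp_proj \<rho> ** \<sigma>)) \<le> 1"
    using proj_trace_bounds(2)[OF supp_proj_props(1)[OF assms(1)] density_psd[OF assms(2)]]
      density_tr[OF assms(2)] by simp
  then have "elog2 (Re (trace (supp_proj \<rho> ** \<sigma>))) \<le> 0" using elog2_mono by fastforce
  then show ?thesis by (simp add: Dmin_def)
qed

lemma Dmin_zero: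
  assumes "supp_proj \<rho> ** \<sigma> = \<sigma>" "trace \<sigma> = 1"
  shows "Dmin \<rho> \<sigma> = 0"
  using assms by (simp add: Dmin_def)

lemma supp_absorb:
  assumes "psd A" "psd B" "0 < a" "0 \<le> b"
  shows "supp_proj (a *\<^sub>R A + b *\<^sub>R B) ** A = A"
proof -
  define M where "M = a *\<^sub>R A + b *\<^sub>R B"
  have psdM: "psd M" using assms by (simp add: M_def psd_add psd_scaleR)
  define Q where "Q = mat 1 - supp_proj M"
  have pQ: "proj Q" using proj_compl[OF supp_proj_props(1)[OF psdM]] by (simp add: Q_def)
  have QM: "Q ** M = 0" using supp_proj_props(2)[OF psdM] by (simp add: Q_def mult_diff_left)
  have "trace (Q ** M) = of_real a * trace (Q ** A) + of_real b * trace (Q ** B)"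
    by (simp add: M_def matrix_add_ldistrib mmult_scaleR_right trace_add trace_scaleR)
  then have e0: "of_real a * trace (Q ** A) + of_real b * trace (Q ** B) = 0" using QM
    by (simp add: trace_0[simplified])
  have "a * Re (trace (Q ** A)) + b * Re (trace (Q ** B)) =
        Re (of_real a * trace (Q ** A) + of_real b * trace (Q ** B))" by simp
  then have "a * Re (trace (Q ** A)) + b * Re (trace (Q ** B)) = 0" using e0 by simp
  moreover have "0 \<le> Re (trace (Q ** A))" "0 \<le> Re (trace (Q ** B))"
    using tpos[OF proj_psd[OF pQ]] assms by auto
  ultimately have "Re (trace (Q ** A)) = 0" using assms(3,4)
    by (smt (verit) mult_nonneg_nonneg mult_pos_pos)
  then have "Q ** A = 0" by (rule tpos_zero[OF proj_psd[OF pQ] assms(1)])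
  then show ?thesis by (simp add: Q_def mult_diff_left M_def)
qed

lemma supp_absorb1:
  assumes "psd A" "psd B" "0 < a" "0 \<le> b"
  shows "supp_proj (b *\<^sub>R B + a *\<^sub>R A) ** A = A"
  using supp_absorb[OF assms] by (simp add: add.commute)

lemma valid_fix:
  assumes "psd P" "psd (mat 1 - P)" "trace (P ** \<rho>) = 1" "density \<rho>"
  shows "P ** \<rho> = \<rho>" "P ** supp_proj \<rho> = supp_proj \<rho>"
proof -
  have "Re (trace ((mat 1 - P) ** \<rho>)) = 0"
    using assms(3,4) by (simp add: mult_diff_left trace_sub density_tr)
  then have "(mat 1 - P) ** \<rho> = 0" by (rule tpos_zero[OF assms(2) density_psd[OF assms(4)]])
  then show Pr: "P ** \<rho> = \<rho>" by (simp add: mult_diff_left)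
  show "P ** supp_proj \<rho> = supp_proj \<rho>"
  proof (rule mat_eqI)
    fix x
    obtain y where y: "supp_proj \<rho> *v x = \<rho> *v y"
      using supp_proj_props(3)[OF density_psd[OF assms(4)]] by blast
    show "(P ** supp_proj \<rho>) *v x = supp_proj \<rho> *v x"
      by (metis Pr matrix_vector_mul_assoc y)
  qed
qed

lemma psd_sandwich: "psd P \<Longrightarrow> hermitian C \<Longrightarrow> psd (C ** P ** C)"
proof -
  assume a: "psd P" "hermitian C"
  have hC: "adj C = C" using a(2) by (simp add: hermitian_adj)
  have hP: "adj P = P" using a(1) by (simp add: psd_def hermitian_adj)
  have "cinner x ((C ** P ** C) *v x) = cinner (C *v x) (P *v (C *v x))" for x
    by (metis cinner_adj hC matrix_vector_mul_assoc)
  then show ?thesis using psd_nonneg[OF a(1)] hC hP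
    by (simp add: psd_iff hermitian_adj adj_mult matrix_mul_assoc)
qed

lemma valid_ge_supp:
  assumes "psd P" "psd (mat 1 - P)" "trace (P ** \<rho>) = 1" "density \<rho>" "psd f"
  shows "Re (trace (supp_proj \<rho> ** f)) \<le> Re (trace (P ** f))"
proof -
  define S where "S = supp_proj \<rho>"
  have pS: "proj S" using supp_proj_props(1)[OF density_psd[OF assms(4)]] by (simp add: S_def)
  have hS: "adj S = S" "S ** S = S" using pS by (auto simp: proj_def hermitian_adj)
  have hP: "adj P = P" using assms(1) by (simp add: psd_def hermitian_adj)
  have PS: "P ** S = S" using valid_fix(2)[OF assms(1-4)] by (simp add: S_def)
  have SP: "S ** P = S" by (metis PS adj_mult hP hS(1))
  have eq: "(mat 1 - S) ** P ** (mat 1 - S) = P - S"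
    by (simp add: mult_diff_left mult_diff_right PS SP hS(2) matrix_mul_assoc[symmetric])
  have "psd (P - S)"
    using psd_sandwich[OF assms(1) proj_compl[OF pS, unfolded proj_def, THEN conjunct1]] eq by simp
  then have "0 \<le> Re (trace ((P - S) ** f))" using tpos assms(5) by blast
  then show ?thesis by (simp add: S_def[symmetric] mult_diff_left trace_sub)
qed

lemma DH0_le_Dmin:
  assumes "density \<rho>" "psd f"
  shows "DH0 \<rho> f \<le> Dmin \<rho> f"
  unfolding DH0_def Dmin_def
proof (rule SUP_least)
  fix P assume "P \<in> {P. psd P \<and> psd (mat 1 - P) \<and> trace (P ** \<rho>) = 1}"
  then show "- elog2 (Re (trace (P ** f))) \<le> - elog2 (Re (trace (supp_proj \<rho> ** f)))"
    using valid_ge_supp[OF _ _ _ assms(1,2)] neg_elog2_anti by blast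
qed

lemma DH0_ge0:
  assumes "density \<rho>" "trace \<theta> = 1"
  shows "0 \<le> DH0 \<rho> \<theta>"
proof -
  have "mat 1 \<in> {P. psd P \<and> psd (mat 1 - P) \<and> trace (P ** \<rho>) = 1}"
    using assms(1) by (simp add: psd_mat1 psd_zero density_tr)
  then have "- elog2 (Re (trace (mat 1 ** \<theta>))) \<le> DH0 \<rho> \<theta>"
    unfolding DH0_def by (rule SUP_upper)
  then show ?thesis using assms(2) by simp
qed

lemma trace_aff:
  assumes "\<forall>\<sigma>\<in>F. density \<sigma>" "\<theta> \<in> affine hull F"
  shows "trace \<theta> = 1"
proof -
  have "affine {X::complex^'n^'n. trace X = 1}"
    unfolding affine_def by (auto simp: trace_add trace_scaleR simp flip: distrib_right of_real_add)
  moreover have "F \<subseteq> {X. trace X = 1}" using assms(1) density_tr by blast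
  ultimately have "affine hull F \<subseteq> {X. trace X = 1}" by (rule hull_minimal[rotated])
  then show ?thesis using assms(2) by blast
qed

lemma Dmin_aff_le_Dmin_F:
  assumes "\<forall>\<sigma>\<in>F. density \<sigma>" "density \<rho>"
  shows "Dmin_aff F \<rho> \<le> Dmin_F F \<rho>"
proof -
  have "Dmin_aff F \<rho> \<le> (INF \<sigma>\<in>F. DH0 \<rho> \<sigma>)"
    unfolding Dmin_aff_def by (rule INF_superset_mono) (auto simp: hull_subset[THEN subsetD])
  also have "\<dots> \<le> Dmin_F F \<rho>"
    unfolding Dmin_F_def
    by (rule INF_mono) (use DH0_le_Dmin[OF assms(2)] assms(1) density_psd in blast)
  finally show ?thesis .
qed

lemma Dmin_aff_ge0:
  assumes "\<forall>\<sigma>\<in>F. density \<sigma>" "density \<rho>"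
  shows "0 \<le> Dmin_aff F \<rho>"
  unfolding Dmin_aff_def
  by (rule INF_greatest) (use DH0_ge0[OF assms(2)] trace_aff[OF assms(1)] in blast)

lemma Dmin_F_ge0:
  assumes "\<forall>\<sigma>\<in>F. density \<sigma>" "psd \<rho>"
  shows "0 \<le> Dmin_F F \<rho>"
  unfolding Dmin_F_def
  by (rule INF_greatest) (use Dmin_nonneg[OF assms(2)] assms(1) in blast)



lemma Dmax_le:
  assumes "density \<tau>" "0 \<le> s" "(1 / (1 + s)) *\<^sub>R (\<rho> + s *\<^sub>R \<tau>) \<in> F"
  shows "Dmax_F F \<rho> \<le> ereal (log 2 (1 + s))"
  unfolding Dmax_F_def by (rule INF_lower) (use assms in blast)

lemma Ds_le:
  assumes "\<tau> \<in> F" "0 \<le> s" "(1 / (1 + s)) *\<^sub>R (\<rho> + s *\<^sub>R \<tau>) \<in> F"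
  shows "Ds_F F \<rho> \<le> ereal (log 2 (1 + s))"
  unfolding Ds_F_def by (rule INF_lower) (use assms in blast)

lemma Dmax_le_Ds:
  assumes "\<forall>\<sigma>\<in>F. density \<sigma>"
  shows "Dmax_F F \<rho> \<le> Ds_F F \<rho>"
  unfolding Dmax_F_def Ds_F_def
  by (rule INF_superset_mono) (use assms in auto)

lemma Dmax_ge0: "0 \<le> Dmax_F F \<rho>"
  unfolding Dmax_F_def
  by (rule INF_greatest) (auto simp: zero_ereal_def)

lemma Dmin_le_Dmax:
  assumes F: "\<forall>\<sigma>\<in>F. density \<sigma>" and r: "density \<rho>"
  shows "Dmin_F F \<rho> \<le> Dmax_F F \<rho>"
  unfolding Dmax_F_def
proof (rule INF_greatest)
  fix s assume "s \<in> {s. 0 \<le> s \<and> (\<exists>\<tau>. density \<tau> \<and> (1 / (1 + s)) *\<^sub>R (\<rho> + s *\<^sub>R \<tau>) \<in> F)}"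
  then obtain \<tau> where s0: "0 \<le> s" and t: "density \<tau>" and f: "(1 / (1 + s)) *\<^sub>R (\<rho> + s *\<^sub>R \<tau>) \<in> F"
    by blast
  define f where "f = (1 / (1 + s)) *\<^sub>R (\<rho> + s *\<^sub>R \<tau>)"
  define S where "S = supp_proj \<rho>"
  have SR: "S ** \<rho> = \<rho>" using supp_proj_props(2)[OF density_psd[OF r]] by (simp add: S_def)
  have St: "0 \<le> Re (trace (S ** \<tau>))"
    using proj_trace_bounds(1)[OF supp_proj_props(1)[OF density_psd[OF r]] density_psd[OF t]]
    by (simp add: S_def)
  have "Re (trace (S ** f)) = (1 / (1 + s)) * (1 + s * Re (trace (S ** \<tau>)))"
    using r by (simp add: f_def matrix_add_ldistrib mmult_scaleR_right trace_add trace_scaleR SR density_tr)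
  also have "\<dots> \<ge> 1 / (1 + s)" using s0 St by (simp add: field_simps)
  finally have ge: "1 / (1 + s) \<le> Re (trace (S ** f))" .
  have "Dmin_F F \<rho> \<le> Dmin \<rho> f" unfolding Dmin_F_def by (rule INF_lower) (use f in \<open>simp add: f_def\<close>)
  also have "\<dots> \<le> - elog2 (1 / (1 + s))" unfolding Dmin_def S_def[symmetric]
    by (rule neg_elog2_anti[OF ge])
  also have "\<dots> = ereal (log 2 (1 + s))" using s0 by (simp add: elog2_pos log_divide)
  finally show "Dmin_F F \<rho> \<le> ereal (log 2 (1 + s))" .
qed

lemma comb_identity:
  fixes A B T :: "'a::real_vector"
  assumes a: "0 < a" and d: "0 < 1 + s - a" and s: "0 \<le> s"
  shows "(1 / (1 + ((1 + s) / a - 1))) *\<^sub>R (A + ((1 + s) / a - 1) *\<^sub>R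
            ((1 / (1 + s - a)) *\<^sub>R ((1 - a) *\<^sub>R B + s *\<^sub>R T)))
        = (1 / (1 + s)) *\<^sub>R (a *\<^sub>R A + (1 - a) *\<^sub>R B + s *\<^sub>R T)"
proof -
  have c1: "1 / (1 + ((1 + s) / a - 1)) = a / (1 + s)" using a by simp
  have c2: "((1 + s) / a - 1) * (1 / (1 + s - a)) = 1 / a" using a d by (simp add: field_simps)
  have "(1 / (1 + ((1 + s) / a - 1))) *\<^sub>R (A + ((1 + s) / a - 1) *\<^sub>R
            ((1 / (1 + s - a)) *\<^sub>R ((1 - a) *\<^sub>R B + s *\<^sub>R T)))
       = (a / (1 + s)) *\<^sub>R (A + (1 / a) *\<^sub>R ((1 - a) *\<^sub>R B + s *\<^sub>R T))"
    by (simp only: c1 scaleR_scaleR c2)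
  also have "\<dots> = (1 / (1 + s)) *\<^sub>R (a *\<^sub>R A + (1 - a) *\<^sub>R B + s *\<^sub>R T)"
    using a s by (simp add: scaleR_add_right scaleR_scaleR field_simps add.assoc)
  finally show ?thesis .
qed

lemma Dmax_comb:
  assumes F: "\<forall>\<sigma>\<in>F. density \<sigma>" and A: "density A" and B: "density B" and a: "0 < a" "a \<le> 1"
  shows "Dmax_F F A + ereal (log 2 a) \<le> Dmax_F F (a *\<^sub>R A + (1 - a) *\<^sub>R B)"
  unfolding Dmax_F_def[of F "a *\<^sub>R A + (1 - a) *\<^sub>R B"]
proof (rule INF_greatest)
  fix s assume "s \<in> {s. 0 \<le> s \<and> (\<exists>\<tau>. density \<tau> \<and>
      (1 / (1 + s)) *\<^sub>R (a *\<^sub>R A + (1 - a) *\<^sub>R B + s *\<^sub>R \<tau>) \<in> F)}"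
  then obtain \<tau> where s0: "0 \<le> s" and t: "density \<tau>"
    and f: "(1 / (1 + s)) *\<^sub>R (a *\<^sub>R A + (1 - a) *\<^sub>R B + s *\<^sub>R \<tau>) \<in> F" by blast
  have "Dmax_F F A \<le> ereal (log 2 ((1 + s) / a))"
  proof (cases "1 + s - a = 0")
    case True
    then have "s = 0" "a = 1" using s0 a by auto
    then have "(1 / (1 + 0)) *\<^sub>R (A + 0 *\<^sub>R B) \<in> F" using f by simp
    from Dmax_le[OF B _ this] show ?thesis using \<open>s = 0\<close> \<open>a = 1\<close> by simp
  next
    case False
    then have d: "0 < 1 + s - a" using s0 a by simp
    define c where "c = (1 - a) / (1 + s - a)"
    have c01: "0 \<le> c" "c \<le> 1" using d a s0 by (auto simp: c_def field_simps)
    have tau': "(1 / (1 + s - a)) *\<^sub>R ((1 - a) *\<^sub>R B + s *\<^sub>R \<tau>) = c *\<^sub>R B + (1 - c) *\<^sub>R \<tau>"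
    proof -
      show ?thesis
        apply (simp add: scaleR_add_right scaleR_scaleR c_def)
        apply (rule disjI1) using d by (simp add: field_simps)
    qed
    have dt: "density ((1 / (1 + s - a)) *\<^sub>R ((1 - a) *\<^sub>R B + s *\<^sub>R \<tau>))"
      unfolding tau' by (rule density_comb[OF B t c01])
    have s'0: "0 \<le> (1 + s) / a - 1" using a s0 by (simp add: field_simps)
    have "(1 / (1 + ((1 + s) / a - 1))) *\<^sub>R (A + ((1 + s) / a - 1) *\<^sub>R
            ((1 / (1 + s - a)) *\<^sub>R ((1 - a) *\<^sub>R B + s *\<^sub>R \<tau>))) \<in> F"
      using f comb_identity[OF a(1) d s0, of A B \<tau>] by simp
    from Dmax_le[OF dt s'0 this] show ?thesis by simp
  qed
  also have "log 2 ((1 + s) / a) = log 2 (1 + s) - log 2 a" using a s0 by (simp add: log_divide)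
  finally show "Dmax_F F A + ereal (log 2 a) \<le> ereal (log 2 (1 + s))"
    by (cases "Dmax_F F A") auto
qed



definition validP :: "complex^'n::finite^'n \<Rightarrow> (complex^'n^'n) set" where
  "validP \<rho> = {P. psd P \<and> psd (mat 1 - P) \<and> trace (P ** \<rho>) = 1}"

lemma psd_entry:
  assumes "psd B"
  shows "2 * \<bar>Re (B$i$j)\<bar> \<le> Re (B$i$i) + Re (B$j$j)" "2 * \<bar>Im (B$i$j)\<bar> \<le> Re (B$i$i) + Re (B$j$j)"
proof -
  have h: "hermitian B" using assms by (simp add: psd_def)
  have ji: "B$j$i = cnj (B$i$j)" using h unfolding hermitian_def by metis
  have ii: "B$i$i = of_real (Re (B$i$i))" "B$j$j = of_real (Re (B$j$j))"
    using herm_diag_real[OF h] by auto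
  have q: "0 \<le> Re (B$i$i + l * B$i$j + cnj l * cnj (B$i$j) + cnj l * l * B$j$j)" for l
  proof -
    have "0 \<le> Re (cinner (axis i 1 + l *s axis j 1) (B *v (axis i 1 + l *s axis j 1)))"
      by (rule psd_nonneg[OF assms])
    then show ?thesis unfolding qf_expand by (simp add: cinner_axis axis_col ji)
  qed
  have q1: "0 \<le> Re (B$i$i) + 2 * Re (B$i$j) + Re (B$j$j)" using q[of 1] ii by simp
  have q2: "0 \<le> Re (B$i$i) - 2 * Re (B$i$j) + Re (B$j$j)" using q[of "-1"] ii by simp
  have q3: "0 \<le> Re (B$i$i) - 2 * Im (B$i$j) + Re (B$j$j)" using q[of "\<i>"] ii by simp
  have q4: "0 \<le> Re (B$i$i) + 2 * Im (B$i$j) + Re (B$j$j)" using q[of "-\<i>"] ii by simp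
  show "2 * \<bar>Re (B$i$j)\<bar> \<le> Re (B$i$i) + Re (B$j$j)" using q1 q2 by linarith
  show "2 * \<bar>Im (B$i$j)\<bar> \<le> Re (B$i$i) + Re (B$j$j)" using q3 q4 by linarith
qed

lemma valid_entry_bound:
  assumes "psd P" "psd (mat 1 - P)"
  shows "cmod (P$i$j) \<le> 2"
proof -
  have d: "Re (P$k$k) \<le> 1" for k
    using psd_nonneg[OF assms(2), of "axis k 1"] by (simp add: qf_axis mat_def)
  have "\<bar>Re (P$i$j)\<bar> \<le> 1" "\<bar>Im (P$i$j)\<bar> \<le> 1"
    using psd_entry[OF assms(1), of i j] d[of i] d[of j] by linarith+
  then show ?thesis using cmod_le[of "P$i$j"] by linarith
qed

lemma norm_vec_le_sum: "norm (x::'a::real_normed_vector^'n::finite) \<le> (\<Sum>i\<in>UNIV. norm (x$i))"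
  by (simp add: norm_vec_def L2_set_le_sum)

lemma bounded_validP: "bounded (validP \<rho>)"
  unfolding bounded_iff
proof (intro exI ballI)
  fix P assume "P \<in> validP \<rho>"
  then have b: "cmod (P$i$j) \<le> 2" for i j using valid_entry_bound by (auto simp: validP_def)
  have "norm P \<le> (\<Sum>i\<in>UNIV. norm (P$i))" by (rule norm_vec_le_sum)
  also have "\<dots> \<le> (\<Sum>i\<in>(UNIV::'a set). \<Sum>j\<in>(UNIV::'a set). cmod (P$i$j))"
    by (intro sum_mono) (rule norm_vec_le_sum)
  also have "\<dots> \<le> (\<Sum>i\<in>(UNIV::'a set). \<Sum>j\<in>(UNIV::'a set). 2)"
    by (intro sum_mono b)
  finally show "norm P \<le> (\<Sum>i\<in>(UNIV::'a set). \<Sum>j\<in>(UNIV::'a set). 2::real)" .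
qed

lemma cont_entry: "continuous_on UNIV (\<lambda>P::complex^'n::finite^'n. P$i$j)"
  by (intro continuous_intros)

lemma cont_qf: "continuous_on UNIV (\<lambda>P::complex^'n::finite^'n. cinner x (P *v x))"
  unfolding cinner_def matrix_vector_mult_def by simp (intro continuous_intros)

lemma cont_qf2: "continuous_on UNIV (\<lambda>P::complex^'n::finite^'n. cinner x ((mat 1 - P) *v x))"
  unfolding cinner_def matrix_vector_mult_def by simp (intro continuous_intros)

lemma cont_tr: "continuous_on UNIV (\<lambda>P::complex^'n::finite^'n. trace (P ** A))"
  unfolding trace_def matrix_matrix_mult_def by simp (intro continuous_intros)

lemma closed_validP: "closed (validP (\<rho>::complex^'n::finite^'n))"
proof -
  have eq: "validP \<rho> = {P. \<forall>i j. P$i$j = cnj (P$j$i)} \<inter> {P. \<forall>x. 0 \<le> Re (cinner x (P *v x))}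
      \<inter> {P. \<forall>i j. (mat 1 - P)$i$j = cnj ((mat 1 - P)$j$i)} \<inter> {P. \<forall>x. 0 \<le> Re (cinner x ((mat 1 - P) *v x))}
      \<inter> {P. trace (P ** \<rho>) = 1}"
    by (auto simp: validP_def psd_iff hermitian_def)
  show ?thesis unfolding eq
    apply (intro closed_Int closed_Collect_all closed_Collect_le closed_Collect_eq continuous_intros
        cont_qf cont_qf2 cont_tr)
    done
qed

lemma compact_validP: "compact (validP (\<rho>::complex^'n::finite^'n))"
  by (simp add: compact_eq_bounded_closed bounded_validP closed_validP)

lemma mat1_comb: "u + v = 1 \<Longrightarrow> mat 1 - (u *\<^sub>R P + v *\<^sub>R Q) = u *\<^sub>R (mat 1 - P) + v *\<^sub>R (mat 1 - (Q::complex^'n::finite^'n))"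
proof -
  assume uv: "u + v = 1"
  have "mat 1 = u *\<^sub>R (mat 1::complex^'n^'n) + v *\<^sub>R mat 1" by (simp add: uv flip: scaleR_add_left)
  then show ?thesis by (simp add: algebra_simps)
qed

lemma trace_comb: "trace ((u *\<^sub>R P + v *\<^sub>R Q) ** A) = of_real u * trace (P ** A) + of_real v * trace (Q ** (A::complex^'n::finite^'n))"
  by (simp add: mult_add_left mmult_scaleR_left trace_add trace_scaleR)

lemma convex_validP: "convex (validP (\<rho>::complex^'n::finite^'n))"
  unfolding convex_def validP_def
proof (intro ballI allI impI, clarsimp)
  fix P Q :: "complex^'n^'n" and u v :: real
  assume a: "psd P" "psd (mat 1 - P)" "trace (P ** \<rho>) = 1" "psd Q" "psd (mat 1 - Q)"
    "trace (Q ** \<rho>) = 1" "0 \<le> u" "0 \<le> v" "u + v = 1"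
  show "psd (u *\<^sub>R P + v *\<^sub>R Q) \<and> psd (mat 1 - (u *\<^sub>R P + v *\<^sub>R Q)) \<and>
        trace ((u *\<^sub>R P + v *\<^sub>R Q) ** \<rho>) = 1"
    using a by (simp add: psd_add psd_scaleR mat1_comb trace_comb flip: of_real_add)
qed



lemma trace_lin2: "trace (P ** ((1 + m) *\<^sub>R w - m *\<^sub>R s)) =
    of_real (1 + m) * trace (P ** w) - of_real m * trace (P ** (s::complex^'n::finite^'n))"
  by (simp add: mult_diff_right mmult_scaleR_right trace_sub trace_scaleR)

lemma sep_main:
  fixes F :: "(complex^'n::finite^'n) set"
  assumes F: "\<forall>\<sigma>\<in>F. density \<sigma>" and Phi: "density \<Phi>" and sig: "density \<sigma>"
    and t: "0 < t" "t < 1"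
    and om: "(1 - t) *\<^sub>R \<Phi> + t *\<^sub>R \<sigma> \<in> F"
    and Daff: "ereal (- log 2 (1 - t)) \<le> Dmin_aff F \<Phi>"
    and s': "\<sigma>' \<in> affine hull F"
  shows "\<exists>P. psd P \<and> psd (mat 1 - P) \<and> trace (P ** \<sigma>) = 1 \<and> Re (trace (P ** \<sigma>')) \<le> t"
proof -
  define \<omega> where "\<omega> = (1 - t) *\<^sub>R \<Phi> + t *\<^sub>R \<sigma>"
  define L where "L = (\<lambda>P::complex^'n^'n. (Re (trace (P ** \<omega>)), Re (trace (P ** (\<omega> - \<sigma>')))))"
  define K where "K = L ` validP \<Phi>"
  have Ptr: "Re (trace (P ** \<omega>)) = (1 - t) + t * Re (trace (P ** \<sigma>))" if "P \<in> validP \<Phi>" for P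
    using that by (simp add: validP_def \<omega>_def matrix_add_ldistrib mmult_scaleR_right trace_add trace_scaleR)
  have cge: "1 - t \<le> Re (trace (P ** \<omega>))" if "P \<in> validP \<Phi>" for P
  proof -
    have "0 \<le> Re (trace (P ** \<sigma>))" using that tpos density_psd[OF sig] by (auto simp: validP_def)
    then show ?thesis using Ptr[OF that] t by simp
  qed
  have contL: "continuous_on UNIV L"
    unfolding L_def by (intro continuous_intros cont_tr)
  have compK: "compact K" unfolding K_def
    by (rule compact_continuous_image[OF continuous_on_subset[OF contL] compact_validP]) simp
  have linL: "L (u *\<^sub>R P + v *\<^sub>R Q) = u *\<^sub>R L P + v *\<^sub>R L Q" for u v :: real and P Q :: "complex^'n^'n"
    by (simp add: L_def trace_comb)
  have convK: "convex K"
    unfolding convex_def K_def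
  proof (intro ballI allI impI)
    fix x y and u v :: real assume xy: "x \<in> L ` validP \<Phi>" "y \<in> L ` validP \<Phi>" and uv: "0 \<le> u" "0 \<le> v" "u + v = 1"
    then obtain P Q where "P \<in> validP \<Phi>" "Q \<in> validP \<Phi>" "x = L P" "y = L Q" by blast
    moreover have "u *\<^sub>R P + v *\<^sub>R Q \<in> validP \<Phi>"
      using convex_validP calculation(1,2) uv unfolding convex_def by blast
    ultimately show "u *\<^sub>R x + v *\<^sub>R y \<in> L ` validP \<Phi>" by (metis image_eqI linL)
  qed
  have zK: "(1 - t, 0) \<in> K"
  proof (rule ccontr)
    assume "(1 - t, 0) \<notin> K"
    from separating_hyperplane_closed_point[OF convK compact_imp_closed[OF compK] this]
    obtain a b where ab: "inner a (1 - t, 0::real) < b" "\<forall>x\<in>K. b < inner a x" by blast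
    obtain a1 a2 where a: "a = (a1, a2)" by (cases a)
    have ab1: "a1 * (1 - t) < b" using ab(1) by (simp add: a)
    define M where "M = 1 / (1 + \<bar>a1\<bar>)"
    have M0: "0 < M" by (simp add: M_def add_pos_nonneg)
    have Ma1: "M * a1 < 1" by (simp add: M_def field_simps)
    define \<mu> where "\<mu> = M * a2"
    define \<beta> where "\<beta> = (1 - t) + M * (b - a1 * (1 - t))"
    have \<beta>gt: "1 - t < \<beta>" using ab1 M0 by (simp add: \<beta>_def)
    define \<theta> where "\<theta> = (1 + \<mu>) *\<^sub>R \<omega> - \<mu> *\<^sub>R \<sigma>'"
    have \<theta>aff: "\<theta> \<in> affine hull F"
    proof -
      have w: "\<omega> \<in> affine hull F" using om hull_subset by (fastforce simp: \<omega>_def)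
      have "(1 + \<mu>) *\<^sub>R \<omega> + (- \<mu>) *\<^sub>R \<sigma>' \<in> affine hull F"
        by (rule affine_affine_hull[of F, unfolded affine_def[of "affine hull F"], rule_format, OF w s']) simp
      then show ?thesis by (simp add: \<theta>_def)
    qed
    have bnd: "\<beta> \<le> Re (trace (P ** \<theta>))" if P: "P \<in> validP \<Phi>" for P
    proof -
      define c where "c = Re (trace (P ** \<omega>))"
      define s where "s = Re (trace (P ** (\<omega> - \<sigma>')))"
      have "b < a1 * c + a2 * s" using ab(2) P by (auto simp: K_def L_def a c_def s_def)
      then have "M * b < M * (a1 * c + a2 * s)" using M0 by (rule mult_strict_left_mono)
      then have "M * (b - a1 * c) < M * (a2 * s)" by (simp add: algebra_simps)
      moreover have "(1 - t) * (1 - M * a1) \<le> c * (1 - M * a1)"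
        using cge[OF P] Ma1 by (simp add: c_def mult_right_mono)
      moreover have "Re (trace (P ** \<theta>)) = c + \<mu> * s"
      proof -
        have e1: "Re (trace (P ** \<theta>)) = (1 + \<mu>) * c - \<mu> * Re (trace (P ** \<sigma>'))"
          unfolding \<theta>_def trace_lin2 c_def by simp
        have e2: "s = c - Re (trace (P ** \<sigma>'))" by (simp add: s_def c_def mult_diff_right trace_sub)
        show ?thesis unfolding e1 e2 by (simp add: algebra_simps)
      qed
      ultimately show ?thesis by (simp add: \<beta>_def \<mu>_def algebra_simps)
    qed
    have b0: "0 < \<beta>" using \<beta>gt t by simp
    have "Dmin_aff F \<Phi> \<le> DH0 \<Phi> \<theta>" unfolding Dmin_aff_def by (rule INF_lower[OF \<theta>aff])
    also have "DH0 \<Phi> \<theta> \<le> - elog2 \<beta>"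
      unfolding DH0_def
    proof (rule SUP_least)
      fix P assume "P \<in> {P. psd P \<and> psd (mat 1 - P) \<and> trace (P ** \<Phi>) = 1}"
      then have "P \<in> validP \<Phi>" by (simp add: validP_def)
      then show "- elog2 (Re (trace (P ** \<theta>))) \<le> - elog2 \<beta>" by (intro neg_elog2_anti bnd)
    qed
    also have "\<dots> = ereal (- log 2 \<beta>)" using b0 by (simp add: elog2_pos)
    finally have "ereal (- log 2 (1 - t)) \<le> ereal (- log 2 \<beta>)" using Daff by (rule order_trans[rotated])
    then have "- log 2 (1 - t) \<le> - log 2 \<beta>" by simp
    moreover have "log 2 (1 - t) < log 2 \<beta>" using \<beta>gt t by simp
    ultimately show False by simp
  qed
  then obtain P1 where P1: "P1 \<in> validP \<Phi>" "Re (trace (P1 ** \<omega>)) = 1 - t"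
      "Re (trace (P1 ** (\<omega> - \<sigma>'))) = 0"
    by (auto simp: K_def L_def)
  have "t * Re (trace (P1 ** \<sigma>)) = 0" using Ptr[OF P1(1)] P1(2) by simp
  then have re0: "Re (trace (P1 ** \<sigma>)) = 0" using t by simp
  have im0: "Im (trace (P1 ** \<sigma>)) = 0"
    using P1(1) trace_herm_prod_real density_psd[OF sig] by (auto simp: validP_def psd_def)
  have tr0: "trace (P1 ** \<sigma>) = 0" using re0 im0 by (simp add: complex_eq_iff)
  have trs': "trace \<sigma>' = 1" by (rule trace_aff[OF F s'])
  show ?thesis
  proof (intro exI conjI)
    show "psd (mat 1 - P1)" using P1(1) by (simp add: validP_def)
    show "psd (mat 1 - (mat 1 - P1))" using P1(1) by (simp add: validP_def)
    show "trace ((mat 1 - P1) ** \<sigma>) = 1" using tr0 sig by (simp add: mult_diff_left trace_sub density_tr)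
    have "Re (trace (P1 ** \<sigma>')) = 1 - t" using P1(2,3) by (simp add: mult_diff_right trace_sub)
    then show "Re (trace ((mat 1 - P1) ** \<sigma>')) \<le> t" using trs' by (simp add: mult_diff_left trace_sub)
  qed
qed

lemma Dmin_aff_lower:
  fixes F :: "(complex^'n::finite^'n) set"
  assumes F: "\<forall>\<sigma>\<in>F. density \<sigma>" and Phi: "density \<Phi>" and sig: "density \<sigma>"
    and t: "0 < t" "t < 1"
    and om: "(1 - t) *\<^sub>R \<Phi> + t *\<^sub>R \<sigma> \<in> F"
    and Daff: "ereal (- log 2 (1 - t)) \<le> Dmin_aff F \<Phi>"
  shows "ereal (- log 2 t) \<le> Dmin_aff F \<sigma>"
  unfolding Dmin_aff_def
proof (rule INF_greatest)
  fix \<sigma>' assume s': "\<sigma>' \<in> affine hull F"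
  obtain P where P: "psd P" "psd (mat 1 - P)" "trace (P ** \<sigma>) = 1" "Re (trace (P ** \<sigma>')) \<le> t"
    using sep_main[OF F Phi sig t om Daff s'] by blast
  have "ereal (- log 2 t) = - elog2 t" using t by (simp add: elog2_pos)
  also have "\<dots> \<le> - elog2 (Re (trace (P ** \<sigma>')))" by (rule neg_elog2_anti[OF P(4)])
  also have "\<dots> \<le> DH0 \<sigma> \<sigma>'" unfolding DH0_def by (rule SUP_upper) (use P in simp)
  finally show "ereal (- log 2 t) \<le> DH0 \<sigma> \<sigma>'" .
qed



lemma comb_eq: "\<alpha> = \<alpha>' \<Longrightarrow> \<beta> = \<beta>' \<Longrightarrow> \<alpha> *\<^sub>R A + \<beta> *\<^sub>R B = \<alpha>' *\<^sub>R A + \<beta>' *\<^sub>R (B::'a::real_vector)"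
  by simp

lemma scale_comb: "c *\<^sub>R (a *\<^sub>R A + b *\<^sub>R B) = (c * a) *\<^sub>R A + (c * b) *\<^sub>R (B::'a::real_vector)"
  by (simp add: scaleR_add_right)

lemma I1:
  fixes A B :: "'a::real_vector"
  assumes q: "0 < q" and k: "0 < \<kappa>"
  shows "(1 / (1 + (\<kappa> / q - 1))) *\<^sub>R ((\<kappa> *\<^sub>R A + (1 - \<kappa>) *\<^sub>R B) + (\<kappa> / q - 1) *\<^sub>R B)
        = q *\<^sub>R A + (1 - q) *\<^sub>R B"
proof -
  have e: "(\<kappa> *\<^sub>R A + (1 - \<kappa>) *\<^sub>R B) + (\<kappa> / q - 1) *\<^sub>R B = \<kappa> *\<^sub>R A + ((1 - \<kappa>) + (\<kappa> / q - 1)) *\<^sub>R B"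
    by (simp only: add.assoc scaleR_add_left[symmetric])
  have "(1 / (1 + (\<kappa> / q - 1))) *\<^sub>R ((\<kappa> *\<^sub>R A + (1 - \<kappa>) *\<^sub>R B) + (\<kappa> / q - 1) *\<^sub>R B)
      = (1 / (1 + (\<kappa> / q - 1))) *\<^sub>R (\<kappa> *\<^sub>R A + ((1 - \<kappa>) + (\<kappa> / q - 1)) *\<^sub>R B)"
    by (simp only: e)
  also have "\<dots> = ((1 / (1 + (\<kappa> / q - 1))) * \<kappa>) *\<^sub>R A + ((1 / (1 + (\<kappa> / q - 1))) * ((1 - \<kappa>) + (\<kappa> / q - 1))) *\<^sub>R B"
    by (rule scale_comb)
  also have "\<dots> = q *\<^sub>R A + (1 - q) *\<^sub>R B"
    by (intro comb_eq) (use q k in \<open>simp_all add: field_simps\<close>)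
  finally show ?thesis .
qed

lemma I2:
  fixes A B :: "'a::real_vector"
  assumes t: "0 < t" and k: "\<kappa> < 1"
  shows "(1 / (1 + ((1 - \<kappa>) / t - 1))) *\<^sub>R ((\<kappa> *\<^sub>R A + (1 - \<kappa>) *\<^sub>R B) + ((1 - \<kappa>) / t - 1) *\<^sub>R A)
        = (1 - t) *\<^sub>R A + t *\<^sub>R B"
proof -
  have e: "(\<kappa> *\<^sub>R A + (1 - \<kappa>) *\<^sub>R B) + ((1 - \<kappa>) / t - 1) *\<^sub>R A = (\<kappa> + ((1 - \<kappa>) / t - 1)) *\<^sub>R A + (1 - \<kappa>) *\<^sub>R B"
    by (simp add: scaleR_add_left add_ac)
  have "(1 / (1 + ((1 - \<kappa>) / t - 1))) *\<^sub>R ((\<kappa> *\<^sub>R A + (1 - \<kappa>) *\<^sub>R B) + ((1 - \<kappa>) / t - 1) *\<^sub>R A)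
      = (1 / (1 + ((1 - \<kappa>) / t - 1))) *\<^sub>R ((\<kappa> + ((1 - \<kappa>) / t - 1)) *\<^sub>R A + (1 - \<kappa>) *\<^sub>R B)"
    by (simp only: e)
  also have "\<dots> = ((1 / (1 + ((1 - \<kappa>) / t - 1))) * (\<kappa> + ((1 - \<kappa>) / t - 1))) *\<^sub>R A
       + ((1 / (1 + ((1 - \<kappa>) / t - 1))) * (1 - \<kappa>)) *\<^sub>R B"
    by (rule scale_comb)
  also have "\<dots> = (1 - t) *\<^sub>R A + t *\<^sub>R B"
    by (intro comb_eq) (use t k in \<open>simp_all add: field_simps\<close>)
  finally show ?thesis .
qed

lemma I3:
  fixes A B :: "'a::real_vector"
  assumes q: "0 < q"
  shows "(\<kappa> / q) *\<^sub>R (q *\<^sub>R A + (1 - q) *\<^sub>R B) + (1 - \<kappa> / q) *\<^sub>R B = \<kappa> *\<^sub>R A + (1 - \<kappa>) *\<^sub>R B"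
proof -
  have "(\<kappa> / q) *\<^sub>R (q *\<^sub>R A + (1 - q) *\<^sub>R B) + (1 - \<kappa> / q) *\<^sub>R B
      = ((\<kappa> / q) * q) *\<^sub>R A + ((\<kappa> / q) * (1 - q) + (1 - \<kappa> / q)) *\<^sub>R B"
    unfolding scale_comb by (simp only: add.assoc scaleR_add_left[symmetric])
  also have "\<dots> = \<kappa> *\<^sub>R A + (1 - \<kappa>) *\<^sub>R B"
    by (intro comb_eq) (use q in \<open>simp_all add: field_simps\<close>)
  finally show ?thesis .
qed

lemma log_q: "log 2 (2 powr (- r)) = - r" by simp



lemma partA:
  fixes F :: "(complex^'n::finite^'n) set" and \<Phi> :: "complex^'n^'n"
  assumes F_states: "\<forall>\<sigma>\<in>F. density \<sigma>" and F_convex: "convex F"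
    and \<Phi>_state: "density \<Phi>"
    and DF: "Dmin_F F \<Phi> = ereal r" and DS: "Ds_F F \<Phi> = ereal r" and sF: "\<sigma> \<in> F"
    and om: "(2 powr (-r)) *\<^sub>R \<Phi> + (1 - 2 powr (-r)) *\<^sub>R \<sigma> \<in> F"
    and k: "\<kappa> \<in> {0..1::real}"
  shows "Dmin_F F (\<kappa> *\<^sub>R \<Phi> + (1 - \<kappa>) *\<^sub>R \<sigma>) = (if \<kappa> < 1 then 0 else ereal r)"
    "Dmax_F F (\<kappa> *\<^sub>R \<Phi> + (1 - \<kappa>) *\<^sub>R \<sigma>) = max (ereal r + elog2 \<kappa>) 0"
    "Ds_F F (\<kappa> *\<^sub>R \<Phi> + (1 - \<kappa>) *\<^sub>R \<sigma>) = max (ereal r + elog2 \<kappa>) 0"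
proof -
  define q where "q = 2 powr (-r)"
  define \<Phi>k where "\<Phi>k = \<kappa> *\<^sub>R \<Phi> + (1 - \<kappa>) *\<^sub>R \<sigma>"
  have k01: "0 \<le> \<kappa>" "\<kappa> \<le> 1" using k by auto
  have sd: "density \<sigma>" using F_states sF by blast
  have dk: "density \<Phi>k" unfolding \<Phi>k_def by (rule density_comb[OF \<Phi>_state sd k01])
  have r0: "0 \<le> r" using Dmin_F_ge0[OF F_states density_psd[OF \<Phi>_state]] DF by simp
  have q0: "0 < q" "q \<le> 1" using r0 powr_mono[of "-r" 0 "2::real"] by (auto simp: q_def)
  have logq: "log 2 q = - r" by (simp add: q_def)
  have DmaxPhi: "ereal r \<le> Dmax_F F \<Phi>" using Dmin_le_Dmax[OF F_states \<Phi>_state] DF by simp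
  show "Dmin_F F (\<kappa> *\<^sub>R \<Phi> + (1 - \<kappa>) *\<^sub>R \<sigma>) = (if \<kappa> < 1 then 0 else ereal r)"
  proof (cases "\<kappa> < 1")
    case True
    have "Dmin_F F \<Phi>k \<le> Dmin \<Phi>k \<sigma>" unfolding Dmin_F_def by (rule INF_lower[OF sF])
    also have "Dmin \<Phi>k \<sigma> = 0"
      by (rule Dmin_zero) (use supp_absorb1[OF density_psd[OF sd] density_psd[OF \<Phi>_state], of "1 - \<kappa>" \<kappa>]
          True k01 sd in \<open>simp_all add: \<Phi>k_def density_tr\<close>)
    finally have "Dmin_F F \<Phi>k \<le> 0" .
    moreover have "0 \<le> Dmin_F F \<Phi>k" by (rule Dmin_F_ge0[OF F_states density_psd[OF dk]])
    ultimately show ?thesis using True by (simp add: \<Phi>k_def)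
  next
    case False
    then have "\<kappa> = 1" using k01 by simp
    then show ?thesis using DF by simp
  qed
  define m where "m = max (ereal r + elog2 \<kappa>) 0"
  have lower: "m \<le> Dmax_F F \<Phi>k"
  proof -
    have "ereal r + elog2 \<kappa> \<le> Dmax_F F \<Phi>k"
    proof (cases "\<kappa> = 0")
      case True
      then show ?thesis by (simp add: elog2_def)
    next
      case False
      then have kp: "0 < \<kappa>" using k01 by simp
      have "ereal r + elog2 \<kappa> = ereal r + ereal (log 2 \<kappa>)" by (simp only: elog2_pos[OF kp])
      also have "\<dots> \<le> Dmax_F F \<Phi> + ereal (log 2 \<kappa>)" by (rule add_right_mono[OF DmaxPhi])
      also have "\<dots> \<le> Dmax_F F \<Phi>k" unfolding \<Phi>k_def by (rule Dmax_comb[OF F_states \<Phi>_state sd kp k01(2)])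
      finally show ?thesis .
    qed
    then show ?thesis by (simp add: m_def Dmax_ge0)
  qed
  have upper: "Ds_F F \<Phi>k \<le> m"
  proof (cases "\<kappa> \<le> q")
    case True
    have "\<Phi>k = (\<kappa> / q) *\<^sub>R (q *\<^sub>R \<Phi> + (1 - q) *\<^sub>R \<sigma>) + (1 - \<kappa> / q) *\<^sub>R \<sigma>"
      by (simp add: \<Phi>k_def I3[OF q0(1)])
    also have "\<dots> \<in> F"
      by (rule convexD[OF F_convex om[folded q_def] sF]) (use q0 k01 True in \<open>simp_all add: field_simps\<close>)
    finally have inF: "\<Phi>k \<in> F" .
    have "Ds_F F \<Phi>k \<le> ereal (log 2 (1 + 0))" by (rule Ds_le[OF sF]) (use inF in simp_all)
    then show ?thesis unfolding m_def by (simp add: zero_ereal_def max.coboundedI2)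
  next
    case False
    then have kq: "q < \<kappa>" by simp
    have kp: "0 < \<kappa>" using kq q0 by simp
    have s0: "0 \<le> \<kappa> / q - 1" using kq q0 by (simp add: field_simps)
    have "(1 / (1 + (\<kappa> / q - 1))) *\<^sub>R (\<Phi>k + (\<kappa> / q - 1) *\<^sub>R \<sigma>) \<in> F"
      unfolding \<Phi>k_def I1[OF q0(1) kp] using om by (simp add: q_def)
    from Ds_le[OF sF s0 this] have "Ds_F F \<Phi>k \<le> ereal (log 2 (\<kappa> / q))" by simp
    also have "log 2 (\<kappa> / q) = r + log 2 \<kappa>" using kp q0 logq by (simp add: log_divide)
    finally show ?thesis using kp by (simp add: m_def elog2_pos max.coboundedI1)
  qed
  have "Dmax_F F \<Phi>k \<le> Ds_F F \<Phi>k" by (rule Dmax_le_Ds[OF F_states])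
  then show "Dmax_F F (\<kappa> *\<^sub>R \<Phi> + (1 - \<kappa>) *\<^sub>R \<sigma>) = max (ereal r + elog2 \<kappa>) 0"
    "Ds_F F (\<kappa> *\<^sub>R \<Phi> + (1 - \<kappa>) *\<^sub>R \<sigma>) = max (ereal r + elog2 \<kappa>) 0"
    using lower upper by (auto simp: \<Phi>k_def m_def[symmetric])
qed



lemma partB:
  fixes F :: "(complex^'n::finite^'n) set" and \<Phi> :: "complex^'n^'n"
  assumes F_states: "\<forall>\<sigma>\<in>F. density \<sigma>" and F_convex: "convex F"
    and \<Phi>_state: "density \<Phi>"
    and DA: "Dmin_aff F \<Phi> = ereal r" and DM: "Dmax_F F \<Phi> = ereal r" and r0: "0 < r"
    and sd: "density \<sigma>"
    and om: "(2 powr (-r)) *\<^sub>R \<Phi> + (1 - 2 powr (-r)) *\<^sub>R \<sigma> \<in> F"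
    and k: "\<kappa> \<in> {0..1::real}"
  shows "Dmin_aff F (\<kappa> *\<^sub>R \<Phi> + (1 - \<kappa>) *\<^sub>R \<sigma>) = Dmin_F F (\<kappa> *\<^sub>R \<Phi> + (1 - \<kappa>) *\<^sub>R \<sigma>)"
    "Dmin_F F (\<kappa> *\<^sub>R \<Phi> + (1 - \<kappa>) *\<^sub>R \<sigma>) =
       (if \<kappa> = 0 then - elog2 (1 - 2 powr (-r)) else if \<kappa> = 1 then ereal r else 0)"
    "Dmax_F F (\<kappa> *\<^sub>R \<Phi> + (1 - \<kappa>) *\<^sub>R \<sigma>) =
       max (ereal r + elog2 \<kappa>) (elog2 ((1 - \<kappa>) / (1 - 2 powr (-r))))"
proof -
  define q where "q = 2 powr (-r)"
  define t where "t = 1 - q"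
  define \<omega> where "\<omega> = q *\<^sub>R \<Phi> + t *\<^sub>R \<sigma>"
  define \<Phi>k where "\<Phi>k = \<kappa> *\<^sub>R \<Phi> + (1 - \<kappa>) *\<^sub>R \<sigma>"
  have k01: "0 \<le> \<kappa>" "\<kappa> \<le> 1" using k by auto
  have dk: "density \<Phi>k" unfolding \<Phi>k_def by (rule density_comb[OF \<Phi>_state sd k01])
  have q0: "0 < q" "q < 1" using r0 powr_less_mono[of "-r" 0 "2::real"] by (auto simp: q_def)
  have t0: "0 < t" "t < 1" using q0 by (auto simp: t_def)
  have qt: "1 - t = q" by (simp add: t_def)
  have logq: "log 2 q = - r" by (simp add: q_def)
  have omF: "\<omega> \<in> F" using om by (simp add: \<omega>_def q_def t_def)
  have dom: "density \<omega>" using F_states omF by blast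
  have DFPhi: "Dmin_F F \<Phi> = ereal r"
    using Dmin_le_Dmax[OF F_states \<Phi>_state] Dmin_aff_le_Dmin_F[OF F_states \<Phi>_state] DA DM
    by (metis order_antisym)
  have Ls: "ereal (- log 2 t) \<le> Dmin_aff F \<sigma>"
    by (rule Dmin_aff_lower[OF F_states \<Phi>_state sd t0]) (use omF DA qt logq in \<open>simp_all add: \<omega>_def\<close>)
  have Us: "Dmin_F F \<sigma> \<le> ereal (- log 2 t)"
  proof -
    define S where "S = supp_proj \<sigma>"
    have pS: "proj S" using supp_proj_props(1)[OF density_psd[OF sd]] by (simp add: S_def)
    have SS: "S ** \<sigma> = \<sigma>" using supp_proj_props(2)[OF density_psd[OF sd]] by (simp add: S_def)
    have "0 \<le> Re (trace (S ** \<Phi>))" by (rule proj_trace_bounds(1)[OF pS density_psd[OF \<Phi>_state]])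
    moreover have "Re (trace (S ** \<omega>)) = q * Re (trace (S ** \<Phi>)) + t"
      using sd by (simp add: \<omega>_def matrix_add_ldistrib mmult_scaleR_right trace_add trace_scaleR SS density_tr)
    ultimately have ge: "t \<le> Re (trace (S ** \<omega>))" using q0 by simp
    have "Dmin_F F \<sigma> \<le> Dmin \<sigma> \<omega>" unfolding Dmin_F_def by (rule INF_lower[OF omF])
    also have "\<dots> \<le> - elog2 t" unfolding Dmin_def S_def[symmetric] by (rule neg_elog2_anti[OF ge])
    also have "\<dots> = ereal (- log 2 t)" using t0 by (simp add: elog2_pos)
    finally show ?thesis .
  qed
  have Daffs: "Dmin_aff F \<sigma> = ereal (- log 2 t)" "Dmin_F F \<sigma> = ereal (- log 2 t)"
    using Ls Us Dmin_aff_le_Dmin_F[OF F_states sd] by (metis order_antisym order_trans)+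
  have et: "- elog2 (1 - 2 powr (-r)) = ereal (- log 2 t)"
    using t0 by (simp add: elog2_pos t_def q_def)
  have conj: "Dmin_aff F (\<kappa> *\<^sub>R \<Phi> + (1 - \<kappa>) *\<^sub>R \<sigma>) = Dmin_F F (\<kappa> *\<^sub>R \<Phi> + (1 - \<kappa>) *\<^sub>R \<sigma>) \<and>
    Dmin_F F (\<kappa> *\<^sub>R \<Phi> + (1 - \<kappa>) *\<^sub>R \<sigma>) =
       (if \<kappa> = 0 then - elog2 (1 - 2 powr (-r)) else if \<kappa> = 1 then ereal r else 0)"
  proof (cases "\<kappa> = 0")
    case True
    then show ?thesis using Daffs et by simp
  next
    case k0: False
    show ?thesis
    proof (cases "\<kappa> = 1")
      case True
      then show ?thesis using DA DFPhi by simp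
    next
      case k1: False
      have kp: "0 < \<kappa>" "\<kappa> < 1" using k0 k1 k01 by auto
      have a1: "supp_proj \<Phi>k ** \<Phi> = \<Phi>"
        unfolding \<Phi>k_def by (rule supp_absorb[OF density_psd[OF \<Phi>_state] density_psd[OF sd] kp(1)]) (use kp in simp)
      have a2: "supp_proj \<Phi>k ** \<sigma> = \<sigma>"
        unfolding \<Phi>k_def by (rule supp_absorb1[OF density_psd[OF sd] density_psd[OF \<Phi>_state]]) (use kp in simp_all)
      have "supp_proj \<Phi>k ** \<omega> = \<omega>"
        by (simp add: \<omega>_def matrix_add_ldistrib mmult_scaleR_right a1 a2)
      then have "Dmin \<Phi>k \<omega> = 0" by (rule Dmin_zero) (use dom in \<open>simp add: density_tr\<close>)
      then have "Dmin_F F \<Phi>k \<le> 0" unfolding Dmin_F_def by (metis INF_lower omF)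
      moreover have "0 \<le> Dmin_aff F \<Phi>k" by (rule Dmin_aff_ge0[OF F_states dk])
      moreover have "Dmin_aff F \<Phi>k \<le> Dmin_F F \<Phi>k" by (rule Dmin_aff_le_Dmin_F[OF F_states dk])
      ultimately show ?thesis using k0 k1 by (simp add: \<Phi>k_def[symmetric]) (meson antisym order_trans)
    qed
  qed
  then show "Dmin_aff F (\<kappa> *\<^sub>R \<Phi> + (1 - \<kappa>) *\<^sub>R \<sigma>) = Dmin_F F (\<kappa> *\<^sub>R \<Phi> + (1 - \<kappa>) *\<^sub>R \<sigma>)"
    "Dmin_F F (\<kappa> *\<^sub>R \<Phi> + (1 - \<kappa>) *\<^sub>R \<sigma>) =
       (if \<kappa> = 0 then - elog2 (1 - 2 powr (-r)) else if \<kappa> = 1 then ereal r else 0)" by auto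
  define m where "m = max (ereal r + elog2 \<kappa>) (elog2 ((1 - \<kappa>) / t))"
  have lower1: "ereal r + elog2 \<kappa> \<le> Dmax_F F \<Phi>k"
  proof (cases "\<kappa> = 0")
    case True
    then show ?thesis by (simp add: elog2_def)
  next
    case False
    then have kp: "0 < \<kappa>" using k01 by simp
    have "ereal r + elog2 \<kappa> = Dmax_F F \<Phi> + ereal (log 2 \<kappa>)" by (simp only: elog2_pos[OF kp] DM)
    also have "\<dots> \<le> Dmax_F F \<Phi>k" unfolding \<Phi>k_def by (rule Dmax_comb[OF F_states \<Phi>_state sd kp k01(2)])
    finally show ?thesis .
  qed
  have lower2: "elog2 ((1 - \<kappa>) / t) \<le> Dmax_F F \<Phi>k"
  proof (cases "\<kappa> = 1")
    case True
    then show ?thesis by (simp add: elog2_def)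
  next
    case False
    then have kp: "0 < 1 - \<kappa>" using k01 by simp
    have DMs: "ereal (- log 2 t) \<le> Dmax_F F \<sigma>" using Dmin_le_Dmax[OF F_states sd] Daffs(2) by simp
    have "elog2 ((1 - \<kappa>) / t) = ereal (- log 2 t) + ereal (log 2 (1 - \<kappa>))"
      using kp t0 by (simp add: elog2_pos log_divide)
    also have "\<dots> \<le> Dmax_F F \<sigma> + ereal (log 2 (1 - \<kappa>))" by (rule add_right_mono[OF DMs])
    also have "\<dots> \<le> Dmax_F F ((1 - \<kappa>) *\<^sub>R \<sigma> + (1 - (1 - \<kappa>)) *\<^sub>R \<Phi>)"
      by (rule Dmax_comb[OF F_states sd \<Phi>_state kp]) (use k01 in simp)
    also have "(1 - \<kappa>) *\<^sub>R \<sigma> + (1 - (1 - \<kappa>)) *\<^sub>R \<Phi> = \<Phi>k" by (simp add: \<Phi>k_def add.commute)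
    finally show ?thesis .
  qed
  have upper: "Dmax_F F \<Phi>k \<le> m"
  proof (cases "(1 - \<kappa>) * q \<le> \<kappa> * t")
    case True
    then have kq: "q \<le> \<kappa>" using t_def by (simp add: algebra_simps)
    have kp: "0 < \<kappa>" using kq q0 by simp
    have s0: "0 \<le> \<kappa> / q - 1" using kq q0 by (simp add: field_simps)
    have "(1 / (1 + (\<kappa> / q - 1))) *\<^sub>R (\<Phi>k + (\<kappa> / q - 1) *\<^sub>R \<sigma>) \<in> F"
      unfolding \<Phi>k_def I1[OF q0(1) kp] using omF by (simp add: \<omega>_def t_def)
    from Dmax_le[OF sd s0 this] have "Dmax_F F \<Phi>k \<le> ereal (log 2 (\<kappa> / q))" by simp
    also have "log 2 (\<kappa> / q) = r + log 2 \<kappa>" using kp q0 logq by (simp add: log_divide)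
    finally show ?thesis using kp by (simp add: m_def elog2_pos max.coboundedI1)
  next
    case False
    then have kq: "\<kappa> < q" using t_def by (simp add: algebra_simps)
    have k1: "\<kappa> < 1" using kq q0 by simp
    have s0: "0 \<le> (1 - \<kappa>) / t - 1" using kq t0 by (simp add: field_simps t_def)
    have "(1 / (1 + ((1 - \<kappa>) / t - 1))) *\<^sub>R (\<Phi>k + ((1 - \<kappa>) / t - 1) *\<^sub>R \<Phi>) \<in> F"
      unfolding \<Phi>k_def I2[OF t0(1) k1] using omF by (simp add: \<omega>_def qt)
    from Dmax_le[OF \<Phi>_state s0 this] have "Dmax_F F \<Phi>k \<le> ereal (log 2 ((1 - \<kappa>) / t))" by simp
    also have "\<dots> = elog2 ((1 - \<kappa>) / t)" using k1 t0 by (simp add: elog2_pos)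
    finally show ?thesis by (simp add: m_def max.coboundedI2)
  qed
  have "Dmax_F F \<Phi>k = m" using lower1 lower2 upper by (simp add: m_def order_antisym)
  then show "Dmax_F F (\<kappa> *\<^sub>R \<Phi> + (1 - \<kappa>) *\<^sub>R \<sigma>) =
       max (ereal r + elog2 \<kappa>) (elog2 ((1 - \<kappa>) / (1 - 2 powr (-r))))"
    by (simp add: \<Phi>k_def m_def t_def q_def)
qed

theorem proposition2:
  fixes F :: "(complex^'n::finite^'n) set" and \<Phi> :: "complex^'n^'n"
  assumes F_states: "\<forall>\<sigma>\<in>F. density \<sigma>"
    and F_convex: "convex F" and F_closed: "closed F"
    and \<Phi>_state: "density \<Phi>"
  shows
   "(\<forall>(r::real) \<sigma>.
       Dmin_F F \<Phi> = ereal r \<and> Ds_F F \<Phi> = ereal r \<and> \<sigma> \<in> F \<and>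
       (2 powr (-r)) *\<^sub>R \<Phi> + (1 - 2 powr (-r)) *\<^sub>R \<sigma> \<in> F \<longrightarrow>
       (\<forall>\<kappa>\<in>{0..1::real}.
          Dmin_F F (\<kappa> *\<^sub>R \<Phi> + (1 - \<kappa>) *\<^sub>R \<sigma>) = (if \<kappa> < 1 then 0 else ereal r) \<and>
          Dmax_F F (\<kappa> *\<^sub>R \<Phi> + (1 - \<kappa>) *\<^sub>R \<sigma>) = max (ereal r + elog2 \<kappa>) 0 \<and>
          Ds_F F (\<kappa> *\<^sub>R \<Phi> + (1 - \<kappa>) *\<^sub>R \<sigma>) = max (ereal r + elog2 \<kappa>) 0))
    \<and>
    (\<forall>(r::real) \<sigma>.
       Dmin_aff F \<Phi> = ereal r \<and> Dmax_F F \<Phi> = ereal r \<and> 0 < r \<and> density \<sigma> \<and>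
       (2 powr (-r)) *\<^sub>R \<Phi> + (1 - 2 powr (-r)) *\<^sub>R \<sigma> \<in> F \<longrightarrow>
       (\<forall>\<kappa>\<in>{0..1::real}.
          Dmin_aff F (\<kappa> *\<^sub>R \<Phi> + (1 - \<kappa>) *\<^sub>R \<sigma>) = Dmin_F F (\<kappa> *\<^sub>R \<Phi> + (1 - \<kappa>) *\<^sub>R \<sigma>) \<and>
          Dmin_F F (\<kappa> *\<^sub>R \<Phi> + (1 - \<kappa>) *\<^sub>R \<sigma>) =
            (if \<kappa> = 0 then - elog2 (1 - 2 powr (-r)) else if \<kappa> = 1 then ereal r else 0) \<and>
          Dmax_F F (\<kappa> *\<^sub>R \<Phi> + (1 - \<kappa>) *\<^sub>R \<sigma>) =
            max (ereal r + elog2 \<kappa>) (elog2 ((1 - \<kappa>) / (1 - 2 powr (-r))))))"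
  apply (intro conjI allI impI ballI)
  subgoal for r \<sigma> \<kappa> by (elim conjE) (rule partA(1)[OF F_states F_convex \<Phi>_state]; assumption)
  subgoal for r \<sigma> \<kappa> by (elim conjE) (rule partA(2)[OF F_states F_convex \<Phi>_state]; assumption)
  subgoal for r \<sigma> \<kappa> by (elim conjE) (rule partA(3)[OF F_states F_convex \<Phi>_state]; assumption)
  subgoal for r \<sigma> \<kappa> by (elim conjE) (rule partB(1)[OF F_states F_convex \<Phi>_state]; assumption)
  subgoal for r \<sigma> \<kappa> by (elim conjE) (rule partB(2)[OF F_states F_convex \<Phi>_state]; assumption)
  subgoal for r \<sigma> \<kappa> by (elim conjE) (rule partB(3)[OF F_states F_convex \<Phi>_state]; assumption)
  done

end
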